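(* Assume Assumption 1, Assumption 2 and the null hypothesis $H_0:\ T_i(1)=T_i(0)$ for all $i$, and condition on all potential event times $\boldsymbol{T}(1),\boldsymbol{T}(0)$. Then (i) $\{D_{1k}-M_k\}_{k=1}^K$ is a martingale difference sequence with respect to the filtration $(\mathcal{F}_k)_{k}$; and (ii) for each $1\le k\le K$, conditional on $\mathcal{F}_{k-1}$, $D_{1k}$ is hypergeometric: $$D_{1k}\mid \boldsymbol{T}(1),\boldsymbol{T}(0),\mathcal{F}_{k-1}\ \sim\ \mathrm{HGeom}(N_k,D_k,N_{1k}).$$
   Context: There are $n$ units. Unit $i$ has potential event times $T_i(1),T_i(0)\ge 0$, potential censoring times $C_i(1),C_i(0)\in[0,\infty]$, and treatment indicator $Z_i\in\{0,1\}$; bold letters denote $n$-vectors. Assumption 1: conditional on $\boldsymbol{T}(1),\boldsymbol{T}(0),\boldsymbol{C}(1),\boldsymbol{C}(0)$, the $Z_i$ are i.i.d. Bernoulli$(p_1)$, $p_1=1-p_0\in(0,1)$. Assumption 2: $(\boldsymbol{C}(1),\boldsymbol{C}(0))$ is independent of $(\boldsymbol{T}(1),\boldsymbol{T}(0))$ and the pairs $(C_i(1),C_i(0))$ are i.i.d. across $i$. Realized: $T_i=Z_iT_i(1)+(1-Z_i)T_i(0)$, $C_i=Z_iC_i(1)+(1-Z_i)C_i(0)$, $W_i=\min\{T_i,C_i\}$, $\Delta_i=\mathbb{1}(T_i\le C_i)$. Let $t_1<\dots<t_K$ be the distinct values of $\{T_i(0):1\le i\le n\}$, and set $t_0=-\infty$,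 $t_{K+1}=\infty$. For $1\le k\le K$: $N_{1k}=\sum_iZ_i\mathbb{1}(W_i\ge t_k)$, $N_{0k}=\sum_i(1-Z_i)\mathbb{1}(W_i\ge t_k)$, $N_k=N_{1k}+N_{0k}$, $D_{1k}=\sum_iZ_i\Delta_i\mathbb{1}(W_i=t_k)$, $D_k=\sum_i\Delta_i\mathbb{1}(W_i=t_k)$, $M_k=D_kN_{1k}/N_k$ (with $0/0:=0$). For $0\le k\le K$, $\mathcal{F}_k$ is the $\sigma$-algebra generated by $\mathbb{1}(W_i\ge t_q)$, $\Delta_i\mathbb{1}(W_i=t_q)$, $Z_i\Delta_i\mathbb{1}(W_i=t_{q-1})$ and $\sum_{j=1}^nZ_j\mathbb{1}(W_j\ge t_q)$ for $1\le q\le k+1$, $1\le i\le n$. $\mathrm{HGeom}(m,k,b)$ is the hypergeometric distribution of the number of successes in $b$ draws without replacement from a population of size $m$ with $k$ successes. *)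

theory Defs
  imports "HOL-Probability.Probability"
begin

text \<open>Distinct values of T(0), sorted increasingly: t_1 < ... < t_K, with
  t_0 = -infinity and t_{K+1} = +infinity (and beyond).\<close>
definition Kdist :: "nat \<Rightarrow> (nat \<Rightarrow> real) \<Rightarrow> nat" where
  "Kdist n T0 = card (T0 ` {..<n})"

definition tpt :: "nat \<Rightarrow> (nat \<Rightarrow> real) \<Rightarrow> nat \<Rightarrow> ereal" where
  "tpt n T0 k = (if k = 0 then -\<infinity>
     else if k \<le> Kdist n T0 then ereal (sorted_list_of_set (T0 ` {..<n}) ! (k - 1))
     else \<infinity>)"

text \<open>Counting processes, for a fixed outcome: z = treatment indicators,
  w = observed times W_i, d = event indicators Delta_i, s = threshold t_k.\<close>
definition Nrisk1 :: "nat \<Rightarrow> (nat \<Rightarrow> bool) \<Rightarrow> (nat \<Rightarrow> ereal) \<Rightarrow> ereal \<Rightarrow> nat" where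
  "Nrisk1 n z w s = card {i \<in> {..<n}. z i \<and> s \<le> w i}"

definition Nrisk0 :: "nat \<Rightarrow> (nat \<Rightarrow> bool) \<Rightarrow> (nat \<Rightarrow> ereal) \<Rightarrow> ereal \<Rightarrow> nat" where
  "Nrisk0 n z w s = card {i \<in> {..<n}. \<not> z i \<and> s \<le> w i}"

definition Nrisk :: "nat \<Rightarrow> (nat \<Rightarrow> bool) \<Rightarrow> (nat \<Rightarrow> ereal) \<Rightarrow> ereal \<Rightarrow> nat" where
  "Nrisk n z w s = Nrisk1 n z w s + Nrisk0 n z w s"

definition Dev1 :: "nat \<Rightarrow> (nat \<Rightarrow> bool) \<Rightarrow> (nat \<Rightarrow> ereal) \<Rightarrow> (nat \<Rightarrow> bool) \<Rightarrow> ereal \<Rightarrow> nat" where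
  "Dev1 n z w d s = card {i \<in> {..<n}. z i \<and> d i \<and> w i = s}"

definition Dev :: "nat \<Rightarrow> (nat \<Rightarrow> ereal) \<Rightarrow> (nat \<Rightarrow> bool) \<Rightarrow> ereal \<Rightarrow> nat" where
  "Dev n w d s = card {i \<in> {..<n}. d i \<and> w i = s}"

text \<open>M_k = D_k N_{1k} / N_k, with 0/0 = 0 (real division by 0 gives 0).\<close>
definition Mexp :: "nat \<Rightarrow> (nat \<Rightarrow> bool) \<Rightarrow> (nat \<Rightarrow> ereal) \<Rightarrow> (nat \<Rightarrow> bool) \<Rightarrow> ereal \<Rightarrow> real" where
  "Mexp n z w d s = real (Dev n w d s) * real (Nrisk1 n z w s) / real (Nrisk n z w s)"

definition gen_sigma :: "'a measure \<Rightarrow> ('a \<Rightarrow> nat) set \<Rightarrow> 'a measure" where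
  "gen_sigma M fs = sigma (space M) (\<Union>f\<in>fs. {f -` A \<inter> space M | A. True})"

definition filt :: "'a measure \<Rightarrow> nat \<Rightarrow> (nat \<Rightarrow> real) \<Rightarrow> (nat \<Rightarrow> 'a \<Rightarrow> bool)
    \<Rightarrow> ('a \<Rightarrow> nat \<Rightarrow> ereal) \<Rightarrow> ('a \<Rightarrow> nat \<Rightarrow> bool) \<Rightarrow> nat \<Rightarrow> 'a measure" where
  "filt M n T0 Z W Del k = gen_sigma M
     ((\<Union>q\<in>{1..k+1}. \<Union>i\<in>{..<n}.
        {(\<lambda>\<omega>. of_bool (tpt n T0 q \<le> W \<omega> i)),
         (\<lambda>\<omega>. of_bool (Del \<omega> i \<and> W \<omega> i = tpt n T0 q)),
         (\<lambda>\<omega>. of_bool (Z i \<omega> \<and> Del \<omega> i \<and> W \<omega> i = tpt n T0 (q - 1)))})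
      \<union> (\<Union>q\<in>{1..k+1}. {(\<lambda>\<omega>. Nrisk1 n (\<lambda>j. Z j \<omega>) (W \<omega>) (tpt n T0 q))}))"

definition hgeom_pmf :: "nat \<Rightarrow> nat \<Rightarrow> nat \<Rightarrow> nat \<Rightarrow> real" where
  "hgeom_pmf m s b j =
     (if j \<le> b then real (s choose j) * real ((m - s) choose (b - j)) / real (m choose b) else 0)"

definition mds :: "'a measure \<Rightarrow> (nat \<Rightarrow> 'a measure) \<Rightarrow> (nat \<Rightarrow> 'a \<Rightarrow> real) \<Rightarrow> nat \<Rightarrow> bool" where
  "mds M F X K \<longleftrightarrow>
     (\<forall>k\<le>K. subalgebra M (F k)) \<and>
     (\<forall>k<K. sets (F k) \<subseteq> sets (F (Suc k))) \<and>
     (\<forall>k\<in>{1..K}. X k \<in> borel_measurable (F k) \<and> integrable M (X k) \<and>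
        (AE \<omega> in M. real_cond_exp M (F (k - 1)) (X k) \<omega> = 0))"

end

theory Submission
  imports Defs
begin

lemma meas_sum_nat:
  fixes f :: "'i \<Rightarrow> 'a \<Rightarrow> nat"
  assumes "finite I" "\<And>i. i\<in>I \<Longrightarrow> f i \<in> measurable N (count_space UNIV)"
  shows "(\<lambda>\<omega>. \<Sum>i\<in>I. f i \<omega>) \<in> measurable N (count_space UNIV)"
using assms proof (induction I rule: finite_induct)
  case empty then show ?case by simp
next
  case (insert x F)
  have a: "f x \<in> measurable N (count_space UNIV)" using insert by simp
  have b: "(\<lambda>\<omega>. \<Sum>i\<in>F. f i \<omega>) \<in> measurable N (count_space UNIV)" using insert by simp
  have c: "(\<lambda>\<omega>. j + (\<Sum>i\<in>F. f i \<omega>)) \<in> measurable N (count_space UNIV)" for j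
    by (rule measurable_compose_countable[where f="\<lambda>k \<omega>. j + k" and g="\<lambda>\<omega>. \<Sum>i\<in>F. f i \<omega>", OF _ b]) simp
  have "(\<lambda>\<omega>. f x \<omega> + (\<Sum>i\<in>F. f i \<omega>)) \<in> measurable N (count_space UNIV)"
    by (rule measurable_compose_countable[where f="\<lambda>j \<omega>. j + (\<Sum>i\<in>F. f i \<omega>)" and g="f x", OF c a])
  then show ?case using insert by simp
qed

lemma meas_card:
  assumes "finite I" "\<And>i. i\<in>I \<Longrightarrow> Measurable.pred N (P i)"
  shows "(\<lambda>\<omega>. card {i\<in>I. P i \<omega>}) \<in> measurable N (count_space UNIV)"
proof -
  have eq: "card {i\<in>I. P i \<omega>} = (\<Sum>i\<in>I. if P i \<omega> then 1 else 0)" for \<omega>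
    unfolding card_eq_sum by (rule sum.inter_filter[OF assms(1)])
  have m: "(\<lambda>\<omega>. if P i \<omega> then 1 else 0::nat) \<in> measurable N (count_space UNIV)" if "i \<in> I" for i
    by (rule measurable_compose_countable[where f="\<lambda>b \<omega>. if b then 1 else 0::nat" and g="P i", OF _ assms(2)[OF that]]) simp
  show ?thesis unfolding eq by (rule meas_sum_nat[OF assms(1) m])
qed

lemma gen_sigma_space[simp]: "space (gen_sigma M fs) = space M"
  unfolding gen_sigma_def by (rule space_measure_of) auto

lemma gen_sigma_sets: "sets (gen_sigma M fs) = sigma_sets (space M) (\<Union>f\<in>fs. {f -` A \<inter> space M | A. True})"
  unfolding gen_sigma_def by (rule sets_measure_of) auto


lemma gen_sigma_meas: assumes "f \<in> fs" shows "f \<in> measurable (gen_sigma M fs) (count_space UNIV)"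
proof (rule measurableI)
  fix A :: "nat set"
  have "f -` A \<inter> space M \<in> (\<Union>f\<in>fs. {f -` A \<inter> space M | A. True})" using assms by blast
  then show "f -` A \<inter> space (gen_sigma M fs) \<in> sets (gen_sigma M fs)"
    unfolding gen_sigma_sets gen_sigma_space by (rule sigma_sets.Basic)
qed simp

lemma gen_sigma_sub:
  assumes "\<And>f. f\<in>fs \<Longrightarrow> f \<in> measurable M (count_space UNIV)"
  shows "subalgebra M (gen_sigma M fs)"
  unfolding subalgebra_def
proof (intro conjI)
  show "space (gen_sigma M fs) = space M" by simp
  have "(\<Union>f\<in>fs. {f -` A \<inter> space M | A. True}) \<subseteq> sets M"
  proof
    fix x assume "x \<in> (\<Union>f\<in>fs. {f -` A \<inter> space M | A. True})"
    then obtain f A where "f \<in> fs" "x = f -` A \<inter> space M" by blast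
    then show "x \<in> sets M" using assms[of f] measurable_sets[of f M "count_space UNIV" A] by simp
  qed
  then show "sets (gen_sigma M fs) \<subseteq> sets M"
    unfolding gen_sigma_sets by (rule sets.sigma_sets_subset)
qed

lemma gen_sigma_mono: "fs \<subseteq> gs \<Longrightarrow> sets (gen_sigma M fs) \<subseteq> sets (gen_sigma M gs)"
  unfolding gen_sigma_sets by (rule sigma_sets_mono') blast

lemma gen_sigma_sat:
  assumes "A \<in> sets (gen_sigma M fs)"
  shows "A \<subseteq> space M \<and> (\<forall>\<omega>\<in>space M. \<forall>\<omega>'\<in>space M. (\<forall>f\<in>fs. f \<omega> = f \<omega>') \<longrightarrow> (\<omega>\<in>A \<longleftrightarrow> \<omega>'\<in>A))"
  using assms unfolding gen_sigma_sets
proof (induction rule: sigma_sets.induct)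
  case (Basic a)
  then obtain f B where f: "f \<in> fs" and a: "a = f -` B \<inter> space M" by blast
  have "(\<omega>\<in>a \<longleftrightarrow> \<omega>'\<in>a)" if "\<omega>\<in>space M" "\<omega>'\<in>space M" "\<forall>g\<in>fs. g \<omega> = g \<omega>'" for \<omega> \<omega>'
  proof -
    have "f \<omega> = f \<omega>'" using that(3) f by blast
    then show ?thesis using that a by simp
  qed
  moreover have "a \<subseteq> space M" using a by blast
  ultimately show ?case by blast
next
  case Empty
  then show ?case by simp
next
  case (Compl a)
  have "(\<omega>\<in>space M - a \<longleftrightarrow> \<omega>'\<in>space M - a)" if "\<omega>\<in>space M" "\<omega>'\<in>space M" "\<forall>g\<in>fs. g \<omega> = g \<omega>'" for \<omega> \<omega>'
  proof -
    have "(\<omega>\<in>a \<longleftrightarrow> \<omega>'\<in>a)" using Compl.IH that by blast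
    then show ?thesis using that by blast
  qed
  then show ?case by blast
next
  case (Union a)
  have "(\<omega>\<in>\<Union>(range a) \<longleftrightarrow> \<omega>'\<in>\<Union>(range a))" if "\<omega>\<in>space M" "\<omega>'\<in>space M" "\<forall>g\<in>fs. g \<omega> = g \<omega>'" for \<omega> \<omega>'
  proof -
    have "(\<omega>\<in>a i \<longleftrightarrow> \<omega>'\<in>a i)" for i using Union.IH[of i] that by blast
    then show ?thesis by blast
  qed
  moreover have "\<Union>(range a) \<subseteq> space M" using Union.IH by blast
  ultimately show ?case by blast
qed

lemma condexp_atoms:
  fixes X h :: "'a \<Rightarrow> real"
  assumes P: "prob_space M" and fin: "finite fs"
    and fm: "\<And>f. f\<in>fs \<Longrightarrow> f \<in> measurable M (count_space UNIV)"
    and fr: "\<And>f. f\<in>fs \<Longrightarrow> finite (f ` space M)"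
    and iX: "integrable M X" and ih: "integrable M h"
    and hm: "h \<in> borel_measurable (gen_sigma M fs)"
    and at: "\<And>\<omega>0. \<omega>0 \<in> space M \<Longrightarrow>
       (\<integral>\<omega>. X \<omega> * indicator {\<omega>\<in>space M. \<forall>f\<in>fs. f \<omega> = f \<omega>0} \<omega> \<partial>M)
     = (\<integral>\<omega>. h \<omega> * indicator {\<omega>\<in>space M. \<forall>f\<in>fs. f \<omega> = f \<omega>0} \<omega> \<partial>M)"
  shows "AE \<omega> in M. real_cond_exp M (gen_sigma M fs) X \<omega> = h \<omega>"
proof -
  interpret prob_space M by (rule P)
  interpret finite_measure_subalgebra M "gen_sigma M fs"
    by unfold_locales (rule gen_sigma_sub[OF fm])
  define G where "G \<omega> = restrict (\<lambda>f. f \<omega>) fs" for \<omega>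
  have Gfin: "finite (G ` space M)"
  proof (rule finite_subset)
    show "G ` space M \<subseteq> PiE fs (\<lambda>f. f ` space M)" unfolding G_def by auto
    show "finite (PiE fs (\<lambda>f. f ` space M))" using fin fr by (intro finite_PiE) auto
  qed
  have Geq: "G \<omega> = G \<omega>' \<longleftrightarrow> (\<forall>f\<in>fs. f \<omega> = f \<omega>')" for \<omega> \<omega>'
  proof
    assume "G \<omega> = G \<omega>'"
    then show "\<forall>f\<in>fs. f \<omega> = f \<omega>'" unfolding G_def by (metis restrict_apply')
  next
    assume "\<forall>f\<in>fs. f \<omega> = f \<omega>'"
    then show "G \<omega> = G \<omega>'" unfolding G_def by (intro restrict_ext) simp
  qed
  have atm: "{\<omega>\<in>space M. \<forall>f\<in>fs. f \<omega> = f \<omega>0} \<in> sets M" for \<omega>0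
  proof -
    have "Measurable.pred M (\<lambda>\<omega>. \<forall>f\<in>fs. f \<omega> = f \<omega>0)"
    proof (rule pred_intros_finite(3)[OF fin])
      fix f assume "f \<in> fs"
      show "Measurable.pred M (\<lambda>\<omega>. f \<omega> = f \<omega>0)"
        by (rule pred_eq_const1[OF fm[OF \<open>f \<in> fs\<close>]]) simp
    qed
    then show ?thesis by (rule predE)
  qed
  show ?thesis
  proof (rule real_cond_exp_charact)
    fix A assume A: "A \<in> sets (gen_sigma M fs)"
    note sat = gen_sigma_sat[OF A]
    define S where "S = G ` A"
    have Sfin: "finite S" unfolding S_def using Gfin sat by (meson finite_subset image_mono)
    have ind: "(indicator A \<omega> :: real) = (\<Sum>g\<in>S. indicator {\<omega>\<in>space M. G \<omega> = g} \<omega>)" if "\<omega> \<in> space M" for \<omega> :: 'a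
    proof -
      have e: "(indicator {\<omega>\<in>space M. G \<omega> = g} \<omega> :: real) = (if G \<omega> = g then 1 else 0)" for g
        using that by (simp add: indicator_def)
      have "(\<Sum>g\<in>S. indicator {\<omega>\<in>space M. G \<omega> = g} \<omega> :: real) = (\<Sum>g\<in>S. if G \<omega> = g then 1 else 0)"
        by (simp only: e)
      also have "\<dots> = (if G \<omega> \<in> S then 1 else 0)"
        using Sfin by (simp add: sum.delta)
      also have "\<dots> = indicator A \<omega>"
      proof -
        have "G \<omega> \<in> S \<longleftrightarrow> \<omega> \<in> A"
        proof
          assume "G \<omega> \<in> S"
          then obtain \<omega>' where w: "\<omega>' \<in> A" "G \<omega> = G \<omega>'" unfolding S_def by blast
          then have "\<omega>' \<in> space M" using sat by blast
          then show "\<omega> \<in> A" using sat that w Geq by blast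
        qed (simp add: S_def)
        then show ?thesis by (simp add: indicator_def)
      qed
      finally show ?thesis by simp
    qed
    have atS: "\<exists>\<omega>0\<in>space M. {\<omega>\<in>space M. G \<omega> = g} = {\<omega>\<in>space M. \<forall>f\<in>fs. f \<omega> = f \<omega>0}" if "g \<in> S" for g
    proof -
      obtain \<omega>0 where "\<omega>0 \<in> A" "g = G \<omega>0" using \<open>g \<in> S\<close> unfolding S_def by blast
      moreover have "\<omega>0 \<in> space M" using \<open>\<omega>0 \<in> A\<close> sat by blast
      ultimately show ?thesis using Geq by blast
    qed
    have key: "(\<integral>x. F x * indicator A x \<partial>M) = (\<Sum>g\<in>S. \<integral>x. F x * indicator {\<omega>\<in>space M. G \<omega> = g} x \<partial>M)"
      if iF: "integrable M F" for F :: "'a \<Rightarrow> real"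
    proof -
      have "(\<integral>x. F x * indicator A x \<partial>M) = (\<integral>x. (\<Sum>g\<in>S. F x * indicator {\<omega>\<in>space M. G \<omega> = g} x) \<partial>M)"
      proof (rule Bochner_Integration.integral_cong[OF refl])
        fix x assume "x \<in> space M"
        then show "F x * indicator A x = (\<Sum>g\<in>S. F x * indicator {\<omega>\<in>space M. G \<omega> = g} x)"
          using ind[of x] by (simp add: sum_distrib_left)
      qed
      also have "\<dots> = (\<Sum>g\<in>S. \<integral>x. F x * indicator {\<omega>\<in>space M. G \<omega> = g} x \<partial>M)"
      proof (rule Bochner_Integration.integral_sum[where f="\<lambda>g x. F x * indicator {\<omega>\<in>space M. G \<omega> = g} x"])
        fix g assume "g \<in> S"
        then obtain \<omega>0 where "{\<omega>\<in>space M. G \<omega> = g} = {\<omega>\<in>space M. \<forall>f\<in>fs. f \<omega> = f \<omega>0}"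
          using atS by blast
        then show "integrable M (\<lambda>x. F x * indicator {\<omega>\<in>space M. G \<omega> = g} x)"
          using integrable_mult_indicator[OF atm iF] by (simp add: mult.commute)
      qed
      finally show ?thesis .
    qed
    have "(\<integral>x\<in>A. X x \<partial>M) = (\<integral>x. X x * indicator A x \<partial>M)"
      by (simp add: set_lebesgue_integral_def mult.commute)
    also have "\<dots> = (\<Sum>g\<in>S. \<integral>x. X x * indicator {\<omega>\<in>space M. G \<omega> = g} x \<partial>M)" by (rule key[OF iX])
    also have "\<dots> = (\<Sum>g\<in>S. \<integral>x. h x * indicator {\<omega>\<in>space M. G \<omega> = g} x \<partial>M)"
    proof (rule sum.cong)
      fix g assume "g \<in> S"
      then obtain \<omega>0 where "\<omega>0 \<in> space M" "{\<omega>\<in>space M. G \<omega> = g} = {\<omega>\<in>space M. \<forall>f\<in>fs. f \<omega> = f \<omega>0}"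
        using atS by blast
      then show "(\<integral>x. X x * indicator {\<omega>\<in>space M. G \<omega> = g} x \<partial>M) = (\<integral>x. h x * indicator {\<omega>\<in>space M. G \<omega> = g} x \<partial>M)"
        using at by simp
    qed simp
    also have "\<dots> = (\<integral>x. h x * indicator A x \<partial>M)" by (rule key[OF ih, symmetric])
    also have "\<dots> = (\<integral>x\<in>A. h x \<partial>M)"
      by (simp add: set_lebesgue_integral_def mult.commute)
    finally show "(\<integral>x\<in>A. X x \<partial>M) = (\<integral>x\<in>A. h x \<partial>M)" .
  qed (use iX ih hm in auto)
qed

lemma count_split:
  assumes R: "finite R" and D: "D \<subseteq> R" and j: "j \<le> m"
  shows "card {z. z \<subseteq> R \<and> card z = m \<and> card (z \<inter> D) = j}
       = (card D choose j) * ((card R - card D) choose (m - j))"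
proof -
  let ?A = "{z. z \<subseteq> R \<and> card z = m \<and> card (z \<inter> D) = j}"
  let ?B = "{a. a \<subseteq> D \<and> card a = j} \<times> {b. b \<subseteq> R - D \<and> card b = m - j}"
  have fD: "finite D" using R D finite_subset by blast
  have fRD: "finite (R - D)" using R by blast
  have bij: "bij_betw (\<lambda>z. (z \<inter> D, z - D)) ?A ?B"
  proof (rule bij_betw_byWitness[where f'="\<lambda>(a,b). a \<union> b"])
    show "\<forall>z\<in>?A. (\<lambda>(a,b). a \<union> b) (z \<inter> D, z - D) = z" by auto
    show "\<forall>p\<in>?B. (\<lambda>z. (z \<inter> D, z - D)) ((\<lambda>(a,b). a \<union> b) p) = p" by auto
    show "(\<lambda>z. (z \<inter> D, z - D)) ` ?A \<subseteq> ?B"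
    proof (rule subsetI)
      fix p assume "p \<in> (\<lambda>z. (z \<inter> D, z - D)) ` ?A"
      then obtain z where z: "z \<subseteq> R" "card z = m" "card (z \<inter> D) = j" and p: "p = (z \<inter> D, z - D)" by blast
      have fz: "finite z" using z R finite_subset by blast
      have "card z = card (z \<inter> D) + card (z - D)"
        using fz by (metis Int_commute card_Diff_subset_Int card_mono finite_Int inf_le2 le_add_diff_inverse) 
      then show "p \<in> ?B" using z p by auto
    qed
    show "(\<lambda>(a,b). a \<union> b) ` ?B \<subseteq> ?A"
    proof clarify
      fix a b assume a: "a \<subseteq> D" "j = card a" and b: "b \<subseteq> R - D" "card b = m - card a"
      have fa: "finite a" using a fD finite_subset by blast
      have fb: "finite b" using b fRD finite_subset by blast
      have dis: "a \<inter> b = {}" using a b by blast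
      have i: "(a \<union> b) \<inter> D = a" using a b by blast
      show "a \<union> b \<subseteq> R \<and> card (a \<union> b) = m \<and> card ((a \<union> b) \<inter> D) = card a"
        using a b D j card_Un_disjoint[OF fa fb dis] i by auto
    qed
  qed
  have "card ?A = card ?B" using bij_betw_same_card[OF bij] .
  also have "\<dots> = (card D choose j) * (card (R - D) choose (m - j))"
    using fD fRD by (simp add: card_cartesian_product n_subsets)
  also have "card (R - D) = card R - card D" using D fD by (simp add: card_Diff_subset)
  finally show ?thesis .
qed

lemma count_mem:
  assumes R: "finite R" and i: "i \<in> R" and m: "1 \<le> m"
  shows "card {z. z \<subseteq> R \<and> card z = m \<and> i \<in> z} = (card R - 1) choose (m - 1)"
proof -
  let ?A = "{z. z \<subseteq> R \<and> card z = m \<and> i \<in> z}"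
  let ?B = "{y. y \<subseteq> R - {i} \<and> card y = m - 1}"
  have bij: "bij_betw (\<lambda>z. z - {i}) ?A ?B"
  proof (rule bij_betw_byWitness[where f'="insert i"])
    show "\<forall>z\<in>?A. insert i (z - {i}) = z" by auto
    show "\<forall>y\<in>?B. insert i y - {i} = y" by auto
    show "(\<lambda>z. z - {i}) ` ?A \<subseteq> ?B"
    proof clarify
      fix z assume z: "z \<subseteq> R" "m = card z" "i \<in> z"
      have fz: "finite z" using z R finite_subset by blast
      show "z - {i} \<subseteq> R - {i} \<and> card (z - {i}) = card z - 1" using z fz by auto
    qed
    show "insert i ` ?B \<subseteq> ?A"
    proof clarify
      fix y assume y: "y \<subseteq> R - {i}" "card y = m - 1"
      have fy: "finite y" using y R finite_subset by blast
      have "i \<notin> y" using y by blast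
      then show "insert i y \<subseteq> R \<and> card (insert i y) = m \<and> i \<in> insert i y"
        using y fy i m by auto
    qed
  qed
  have "card ?A = card ?B" using bij_betw_same_card[OF bij] .
  also have "\<dots> = card (R - {i}) choose (m - 1)" using R by (simp add: n_subsets)
  also have "card (R - {i}) = card R - 1" using i R by simp
  finally show ?thesis .
qed

lemma sum_card_inter:
  assumes R: "finite R" and D: "D \<subseteq> R"
  shows "(\<Sum>z\<in>{z. z \<subseteq> R \<and> card z = m}. card (z \<inter> D)) * card R = card D * m * (card R choose m)"
proof (cases "m = 0")
  case True
  have "{z. z \<subseteq> R \<and> card z = 0} = {{}}" using R by (auto dest: finite_subset)
  then show ?thesis using True by simp
next
  case False
  let ?Z = "{z. z \<subseteq> R \<and> card z = m}"
  have fZ: "finite ?Z" using R by simp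
  have fD: "finite D" using R D finite_subset by blast
  have "(\<Sum>z\<in>?Z. card (z \<inter> D)) = (\<Sum>z\<in>?Z. \<Sum>i\<in>D. if i \<in> z then 1 else 0)"
    using fD by (intro sum.cong refl) (simp add: sum.If_cases Int_commute)
  also have "\<dots> = (\<Sum>i\<in>D. \<Sum>z\<in>?Z. if i \<in> z then 1 else 0)" by (rule sum.swap)
  also have "\<dots> = (\<Sum>i\<in>D. card {z. z \<subseteq> R \<and> card z = m \<and> i \<in> z})"
  proof (intro sum.cong refl)
    fix i assume "i \<in> D"
    have "(\<Sum>z\<in>?Z. if i \<in> z then 1 else 0) = card {z \<in> ?Z. i \<in> z}"
      unfolding card_eq_sum using sum.inter_filter[OF fZ, of "\<lambda>_. 1::nat" "\<lambda>z. i \<in> z"] by simp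
    also have "{z \<in> ?Z. i \<in> z} = {z. z \<subseteq> R \<and> card z = m \<and> i \<in> z}" by auto
    finally show "(\<Sum>z\<in>?Z. if i \<in> z then 1 else 0) = card {z. z \<subseteq> R \<and> card z = m \<and> i \<in> z}" .
  qed
  also have "\<dots> = (\<Sum>i\<in>D. (card R - 1) choose (m - 1))"
    using R D False by (intro sum.cong refl count_mem) auto
  also have "\<dots> = card D * ((card R - 1) choose (m - 1))" by simp
  finally have e: "(\<Sum>z\<in>?Z. card (z \<inter> D)) = card D * ((card R - 1) choose (m - 1))" .
  have "m * (card R choose m) = card R * ((card R - 1) choose (m - 1))"
    using False by (simp add: times_binomial_minus1_eq)
  then show ?thesis unfolding e by (metis mult.assoc mult.commute)
qed


lemma meas_ofbool:
  assumes "Measurable.pred N P"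
  shows "(\<lambda>\<omega>. of_bool (P \<omega>) :: nat) \<in> measurable N (count_space UNIV)"
  by (rule measurable_compose_countable[where f="\<lambda>b \<omega>. of_bool b :: nat" and g="P", OF _ assms]) simp

lemma meas_real_nat:
  assumes "s \<in> measurable N (count_space UNIV)"
  shows "(\<lambda>\<omega>. real (s \<omega>)) \<in> borel_measurable N"
  by (rule measurable_compose[OF assms]) simp

lemma tpt_real:
  assumes "1 \<le> k" "k \<le> Kdist n T0"
  shows "tpt n T0 k = ereal (sorted_list_of_set (T0 ` {..<n}) ! (k - 1))"
  using assms unfolding tpt_def by simp

lemma tpt_lt:
  assumes "q < k" "1 \<le> k" "k \<le> Kdist n T0"
  shows "tpt n T0 q < tpt n T0 k"
proof (cases "q = 0")
  case True
  have "tpt n T0 0 = -\<infinity>" by (simp add: tpt_def)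
  then show ?thesis using assms True by (simp add: tpt_real)
next
  case False
  let ?L = "sorted_list_of_set (T0 ` {..<n})"
  have len: "length ?L = Kdist n T0" by (simp add: Kdist_def)
  have "?L ! (q - 1) < ?L ! (k - 1)"
    by (rule sorted_wrt_nth_less[OF strict_sorted_list_of_set]) (use assms False len in auto)
  then show ?thesis using assms False by (simp add: tpt_real)
qed

locale ctx = prob_space M for M :: "'a measure" +
  fixes n :: nat and p1 :: real and T1 T0 :: "nat \<Rightarrow> real"
    and Z :: "nat \<Rightarrow> 'a \<Rightarrow> bool"
    and C1 C0 :: "nat \<Rightarrow> 'a \<Rightarrow> ereal"
    and W :: "'a \<Rightarrow> nat \<Rightarrow> ereal" and Del :: "'a \<Rightarrow> nat \<Rightarrow> bool"
  assumes H0: "\<And>i. i < n \<Longrightarrow> T1 i = T0 i"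
    and Zmeas: "\<And>i. i < n \<Longrightarrow> Z i \<in> measurable M (count_space UNIV)"
    and Cmeas: "\<And>i. i < n \<Longrightarrow> (\<lambda>\<omega>. (C1 i \<omega>, C0 i \<omega>)) \<in> borel_measurable M"
    and Zind: "prob_space.indep_vars M (\<lambda>_. count_space UNIV) Z {..<n}"
    and Zbern: "\<And>i. i < n \<Longrightarrow> measure M {\<omega> \<in> space M. Z i \<omega>} = p1"
    and Cind: "prob_space.indep_vars M (\<lambda>_. borel) (\<lambda>i \<omega>. (C1 i \<omega>, C0 i \<omega>)) {..<n}"
    and Cid: "\<And>i. i < n \<Longrightarrow>
       distr M borel (\<lambda>\<omega>. (C1 i \<omega>, C0 i \<omega>)) = distr M borel (\<lambda>\<omega>. (C1 0 \<omega>, C0 0 \<omega>))"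
    and ZCind: "prob_space.indep_set M
       {(\<lambda>\<omega>. \<lambda>i\<in>{..<n}. Z i \<omega>) -` A \<inter> space M | A.
          A \<in> sets (Pi\<^sub>M {..<n} (\<lambda>_. count_space UNIV))}
       {(\<lambda>\<omega>. \<lambda>i\<in>{..<n}. (C1 i \<omega>, C0 i \<omega>)) -` B \<inter> space M | B.
          B \<in> sets (Pi\<^sub>M {..<n} (\<lambda>_. borel))}"
    and W_def: "W = (\<lambda>\<omega> i. min (ereal (if Z i \<omega> then T1 i else T0 i))
                              (if Z i \<omega> then C1 i \<omega> else C0 i \<omega>))"
    and Del_def: "Del = (\<lambda>\<omega> i. ereal (if Z i \<omega> then T1 i else T0 i)
                              \<le> (if Z i \<omega> then C1 i \<omega> else C0 i \<omega>))"
begin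

definition Cp :: "nat \<Rightarrow> 'a \<Rightarrow> ereal \<times> ereal" where "Cp i \<omega> = (C1 i \<omega>, C0 i \<omega>)"
definition Cz :: "nat \<Rightarrow> 'a \<Rightarrow> ereal" where "Cz i \<omega> = (if Z i \<omega> then C1 i \<omega> else C0 i \<omega>)"

lemma W_eq: "i < n \<Longrightarrow> W \<omega> i = min (ereal (T0 i)) (Cz i \<omega>)"
  unfolding W_def Cz_def using H0 by simp

lemma Del_eq: "i < n \<Longrightarrow> Del \<omega> i = (ereal (T0 i) \<le> Cz i \<omega>)"
  unfolding Del_def Cz_def using H0 by simp

lemma meas_gen:
  assumes Zm: "Z i \<in> measurable N (count_space UNIV)"
    and Cm: "Cp i \<in> borel_measurable N"
  shows "(\<lambda>\<omega>. W \<omega> i) \<in> borel_measurable N" "Measurable.pred N (\<lambda>\<omega>. Del \<omega> i)"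
    "Measurable.pred N (\<lambda>\<omega>. Z i \<omega>)"
proof -
  have c1[measurable]: "C1 i \<in> borel_measurable N"
    using measurable_compose[OF Cm borel_measurable_continuous_onI[OF continuous_on_fst[OF continuous_on_id]]]
    by (simp add: Cp_def)
  have c0[measurable]: "C0 i \<in> borel_measurable N"
    using measurable_compose[OF Cm borel_measurable_continuous_onI[OF continuous_on_snd[OF continuous_on_id]]]
    by (simp add: Cp_def)
  have z[measurable]: "Measurable.pred N (\<lambda>\<omega>. Z i \<omega>)" using Zm by simp
  show "(\<lambda>\<omega>. W \<omega> i) \<in> borel_measurable N" unfolding W_def by measurable
  show "Measurable.pred N (\<lambda>\<omega>. Del \<omega> i)" unfolding Del_def by measurable
  show "Measurable.pred N (\<lambda>\<omega>. Z i \<omega>)" by measurable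
qed

lemma Cp_meas: "i < n \<Longrightarrow> Cp i \<in> borel_measurable M"
  using Cmeas unfolding Cp_def by simp

lemmas measM = meas_gen[OF Zmeas Cp_meas]

definition gens :: "nat \<Rightarrow> ('a \<Rightarrow> nat) set" where
  "gens k = ((\<Union>q\<in>{1..k+1}. \<Union>i\<in>{..<n}.
        {(\<lambda>\<omega>. of_bool (tpt n T0 q \<le> W \<omega> i)),
         (\<lambda>\<omega>. of_bool (Del \<omega> i \<and> W \<omega> i = tpt n T0 q)),
         (\<lambda>\<omega>. of_bool (Z i \<omega> \<and> Del \<omega> i \<and> W \<omega> i = tpt n T0 (q - 1)))})
      \<union> (\<Union>q\<in>{1..k+1}. {(\<lambda>\<omega>. Nrisk1 n (\<lambda>j. Z j \<omega>) (W \<omega>) (tpt n T0 q))}))"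

lemma filt_eq: "filt M n T0 Z W Del k = gen_sigma M (gens k)"
  unfolding filt_def gens_def ..

lemma gens_finite: "finite (gens k)"
  unfolding gens_def by simp

lemma gens_mono: "k \<le> k' \<Longrightarrow> gens k \<subseteq> gens k'"
  unfolding gens_def by (intro Un_mono UN_mono order.refl) auto

lemma N1_meas: "(\<lambda>\<omega>. Nrisk1 n (\<lambda>j. Z j \<omega>) (W \<omega>) s) \<in> measurable M (count_space UNIV)"
proof -
  have "(\<lambda>\<omega>. card {i\<in>{..<n}. Z i \<omega> \<and> s \<le> W \<omega> i}) \<in> measurable M (count_space UNIV)"
  proof (rule meas_card)
    fix i assume "i \<in> {..<n}"
    then have [measurable]: "(\<lambda>\<omega>. W \<omega> i) \<in> borel_measurable M" "Measurable.pred M (\<lambda>\<omega>. Z i \<omega>)"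
      using measM by auto
    show "Measurable.pred M (\<lambda>\<omega>. Z i \<omega> \<and> s \<le> W \<omega> i)" by measurable
  qed simp
  then show ?thesis unfolding Nrisk1_def .
qed

lemma gens_meas: "f \<in> gens k \<Longrightarrow> f \<in> measurable M (count_space UNIV)"
proof -
  assume "f \<in> gens k"
  then consider (a) q i where "i < n" "f = (\<lambda>\<omega>. of_bool (tpt n T0 q \<le> W \<omega> i))"
    | (b) q i where "i < n" "f = (\<lambda>\<omega>. of_bool (Del \<omega> i \<and> W \<omega> i = tpt n T0 q))"
    | (c) q i where "i < n" "f = (\<lambda>\<omega>. of_bool (Z i \<omega> \<and> Del \<omega> i \<and> W \<omega> i = tpt n T0 (q - 1)))"
    | (d) q where "f = (\<lambda>\<omega>. Nrisk1 n (\<lambda>j. Z j \<omega>) (W \<omega>) (tpt n T0 q))"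
    unfolding gens_def by blast
  then show ?thesis
  proof cases
    case (a q i)
    then have [measurable]: "(\<lambda>\<omega>. W \<omega> i) \<in> borel_measurable M" using measM by auto
    show ?thesis unfolding a(2) by (rule meas_ofbool) measurable
  next
    case (b q i)
    then have [measurable]: "(\<lambda>\<omega>. W \<omega> i) \<in> borel_measurable M" "Measurable.pred M (\<lambda>\<omega>. Del \<omega> i)"
      using measM by auto
    show ?thesis unfolding b(2) by (rule meas_ofbool) measurable
  next
    case (c q i)
    then have [measurable]: "(\<lambda>\<omega>. W \<omega> i) \<in> borel_measurable M" "Measurable.pred M (\<lambda>\<omega>. Del \<omega> i)"
       "Measurable.pred M (\<lambda>\<omega>. Z i \<omega>)"
      using measM by auto
    show ?thesis unfolding c(2) by (rule meas_ofbool) measurable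
  next
    case (d q)
    show ?thesis unfolding d by (rule N1_meas)
  qed
qed

lemma gens_range: "f \<in> gens k \<Longrightarrow> f \<omega> \<le> max 1 n"
proof -
  assume "f \<in> gens k"
  moreover have "Nrisk1 n z w s \<le> n" for z w s
    unfolding Nrisk1_def by (rule order.trans[OF card_mono[of "{..<n}"]]) auto
  ultimately show ?thesis unfolding gens_def by (auto intro: le_trans[OF _ max.cobounded2])
qed

lemma gens_fin_range: "f \<in> gens k \<Longrightarrow> finite (f ` space M)"
  by (rule finite_subset[of _ "{..max 1 n}"]) (auto dest: gens_range)


definition Eu :: "nat \<Rightarrow> 'a set set" where
  "Eu i = {Z i -` a \<inter> Cp i -` b \<inter> space M | a b. b \<in> sets borel}"

lemma Zset_ZCind:
  assumes J: "J \<subseteq> {..<n}" "finite J"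
  shows "{\<omega>\<in>space M. \<forall>j\<in>J. Z j \<omega> \<in> a j} \<in> {(\<lambda>\<omega>. \<lambda>i\<in>{..<n}. Z i \<omega>) -` A \<inter> space M | A.
          A \<in> sets (Pi\<^sub>M {..<n} (\<lambda>_. count_space UNIV))}"
proof -
  let ?S = "prod_emb {..<n} (\<lambda>_. count_space UNIV) J (PiE J a)"
  have S: "?S \<in> sets (Pi\<^sub>M {..<n} (\<lambda>_. count_space UNIV))"
    by (rule sets_PiM_I) (use J in auto)
  have "(\<lambda>\<omega>. \<lambda>i\<in>{..<n}. Z i \<omega>) -` ?S \<inter> space M = {\<omega>\<in>space M. \<forall>j\<in>J. Z j \<omega> \<in> a j}"
    using J by (auto simp: prod_emb_def PiE_iff subset_iff)
  then show ?thesis using S by blast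
qed

lemma Cset_ZCind:
  assumes J: "J \<subseteq> {..<n}" "finite J" and b: "\<And>j. j \<in> J \<Longrightarrow> b j \<in> sets borel"
  shows "{\<omega>\<in>space M. \<forall>j\<in>J. Cp j \<omega> \<in> b j} \<in> {(\<lambda>\<omega>. \<lambda>i\<in>{..<n}. (C1 i \<omega>, C0 i \<omega>)) -` B \<inter> space M | B.
          B \<in> sets (Pi\<^sub>M {..<n} (\<lambda>_. borel))}"
proof -
  let ?S = "prod_emb {..<n} (\<lambda>_. borel) J (PiE J b)"
  have S: "?S \<in> sets (Pi\<^sub>M {..<n} (\<lambda>_. borel))"
    by (rule sets_PiM_I) (use J b in auto)
  have "(\<lambda>\<omega>. \<lambda>i\<in>{..<n}. (C1 i \<omega>, C0 i \<omega>)) -` ?S \<inter> space M = {\<omega>\<in>space M. \<forall>j\<in>J. Cp j \<omega> \<in> b j}"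
    using J by (auto simp: prod_emb_def PiE_iff Cp_def subset_iff)
  then show ?thesis using S by blast
qed

lemma ZC_split:
  assumes J: "J \<subseteq> {..<n}" "finite J" and b: "\<And>j. j \<in> J \<Longrightarrow> b j \<in> sets borel"
  shows "prob {\<omega>\<in>space M. \<forall>j\<in>J. Z j \<omega> \<in> a j \<and> Cp j \<omega> \<in> b j}
       = prob {\<omega>\<in>space M. \<forall>j\<in>J. Z j \<omega> \<in> a j} * prob {\<omega>\<in>space M. \<forall>j\<in>J. Cp j \<omega> \<in> b j}"
proof -
  have "prob ({\<omega>\<in>space M. \<forall>j\<in>J. Z j \<omega> \<in> a j} \<inter> {\<omega>\<in>space M. \<forall>j\<in>J. Cp j \<omega> \<in> b j})
       = prob {\<omega>\<in>space M. \<forall>j\<in>J. Z j \<omega> \<in> a j} * prob {\<omega>\<in>space M. \<forall>j\<in>J. Cp j \<omega> \<in> b j}"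
    by (rule indep_setD[OF ZCind Zset_ZCind[OF J] Cset_ZCind[OF J b]])
  moreover have "{\<omega>\<in>space M. \<forall>j\<in>J. Z j \<omega> \<in> a j} \<inter> {\<omega>\<in>space M. \<forall>j\<in>J. Cp j \<omega> \<in> b j}
     = {\<omega>\<in>space M. \<forall>j\<in>J. Z j \<omega> \<in> a j \<and> Cp j \<omega> \<in> b j}" by blast
  ultimately show ?thesis by simp
qed

lemma Z_prod:
  assumes J: "J \<subseteq> {..<n}" "J \<noteq> {}" "finite J"
  shows "prob {\<omega>\<in>space M. \<forall>j\<in>J. Z j \<omega> \<in> a j} = (\<Prod>j\<in>J. prob {\<omega>\<in>space M. Z j \<omega> \<in> a j})"
proof -
  have I: "indep_sets (\<lambda>i. {Z i -` A \<inter> space M | A. A \<in> sets (count_space UNIV)}) {..<n}"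
    using Zind unfolding indep_vars_def2 by blast
  have "prob (\<Inter>j\<in>J. Z j -` a j \<inter> space M) = (\<Prod>j\<in>J. prob (Z j -` a j \<inter> space M))"
    by (rule indep_setsD[OF I J(1) J(2) J(3)]) auto
  moreover have "(\<Inter>j\<in>J. Z j -` a j \<inter> space M) = {\<omega>\<in>space M. \<forall>j\<in>J. Z j \<omega> \<in> a j}"
    using J(2) by blast
  moreover have "Z j -` a j \<inter> space M = {\<omega>\<in>space M. Z j \<omega> \<in> a j}" for j by blast
  ultimately show ?thesis by simp
qed

lemma C_prod:
  assumes J: "J \<subseteq> {..<n}" "J \<noteq> {}" "finite J" and b: "\<And>j. j \<in> J \<Longrightarrow> b j \<in> sets borel"
  shows "prob {\<omega>\<in>space M. \<forall>j\<in>J. Cp j \<omega> \<in> b j} = (\<Prod>j\<in>J. prob {\<omega>\<in>space M. Cp j \<omega> \<in> b j})"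
proof -
  have I: "indep_sets (\<lambda>i. {(\<lambda>\<omega>. (C1 i \<omega>, C0 i \<omega>)) -` A \<inter> space M | A. A \<in> sets borel}) {..<n}"
    using Cind unfolding indep_vars_def2 by blast
  have "prob (\<Inter>j\<in>J. Cp j -` b j \<inter> space M) = (\<Prod>j\<in>J. prob (Cp j -` b j \<inter> space M))"
    by (rule indep_setsD[OF I J(1) J(2) J(3)]) (use b in \<open>auto simp: Cp_def\<close>)
  moreover have "(\<Inter>j\<in>J. Cp j -` b j \<inter> space M) = {\<omega>\<in>space M. \<forall>j\<in>J. Cp j \<omega> \<in> b j}"
    using J(2) by blast
  moreover have "Cp j -` b j \<inter> space M = {\<omega>\<in>space M. Cp j \<omega> \<in> b j}" for j by blast
  ultimately show ?thesis by simp
qed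

lemma Eu_events: "i < n \<Longrightarrow> Eu i \<subseteq> events"
proof
  fix x assume i: "i < n" and "x \<in> Eu i"
  then obtain a b where b: "b \<in> sets borel" and x: "x = Z i -` a \<inter> Cp i -` b \<inter> space M"
    unfolding Eu_def by blast
  have "x = (Z i -` a \<inter> space M) \<inter> (Cp i -` b \<inter> space M)" using x by blast
  also have "\<dots> \<in> events"
  proof (rule sets.Int)
    show "Z i -` a \<inter> space M \<in> events" by (rule measurable_sets[OF Zmeas[OF i]]) simp
    show "Cp i -` b \<inter> space M \<in> events" by (rule measurable_sets[OF Cp_meas[OF i] b])
  qed
  finally show "x \<in> events" .
qed

lemma Eu_stable: "Int_stable (Eu i)"
proof (rule Int_stableI)
  fix x y assume "x \<in> Eu i" "y \<in> Eu i"
  then obtain a b a' b' where b: "b \<in> sets borel" "b' \<in> sets borel"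
    and x: "x = Z i -` a \<inter> Cp i -` b \<inter> space M" and y: "y = Z i -` a' \<inter> Cp i -` b' \<inter> space M"
    unfolding Eu_def by blast
  have "x \<inter> y = Z i -` (a \<inter> a') \<inter> Cp i -` (b \<inter> b') \<inter> space M" using x y by blast
  moreover have "b \<inter> b' \<in> sets borel" using b by blast
  ultimately show "x \<inter> y \<in> Eu i" unfolding Eu_def by blast
qed

lemma unit_indep: "indep_sets Eu {..<n}"
proof (rule indep_setsI)
  fix i assume "i \<in> {..<n}" then show "Eu i \<subseteq> events" using Eu_events by simp
next
  fix A J assume J: "J \<noteq> {}" "J \<subseteq> {..<n}" "finite J" and A: "\<forall>j\<in>J. A j \<in> Eu j"
  have "\<forall>j\<in>J. \<exists>ab. snd ab \<in> sets borel \<and> A j = Z j -` fst ab \<inter> Cp j -` snd ab \<inter> space M"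
    using A unfolding Eu_def by fastforce
  then obtain ab where ab: "\<And>j. j\<in>J \<Longrightarrow> snd (ab j) \<in> sets borel \<and> A j = Z j -` fst (ab j) \<inter> Cp j -` snd (ab j) \<inter> space M"
    by metis
  define a where "a j = fst (ab j)" for j
  define b where "b j = snd (ab j)" for j
  have b: "\<And>j. j \<in> J \<Longrightarrow> b j \<in> sets borel" using ab unfolding b_def by blast
  have Aj: "A j = {\<omega>\<in>space M. \<forall>j'\<in>{j}. Z j' \<omega> \<in> a j' \<and> Cp j' \<omega> \<in> b j'}" if "j \<in> J" for j
    using ab[OF that] unfolding a_def b_def by blast
  have pAj: "prob (A j) = prob {\<omega>\<in>space M. Z j \<omega> \<in> a j} * prob {\<omega>\<in>space M. Cp j \<omega> \<in> b j}" if "j \<in> J" for j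
  proof -
    have "prob (A j) = prob {\<omega>\<in>space M. \<forall>j'\<in>{j}. Z j' \<omega> \<in> a j'} * prob {\<omega>\<in>space M. \<forall>j'\<in>{j}. Cp j' \<omega> \<in> b j'}"
      unfolding Aj[OF that] by (rule ZC_split) (use that J b in auto)
    then show ?thesis by simp
  qed
  have "(\<Inter>j\<in>J. A j) = {\<omega>\<in>space M. \<forall>j\<in>J. Z j \<omega> \<in> a j \<and> Cp j \<omega> \<in> b j}"
    using J(1) Aj by blast
  then have "prob (\<Inter>j\<in>J. A j) = prob {\<omega>\<in>space M. \<forall>j\<in>J. Z j \<omega> \<in> a j} * prob {\<omega>\<in>space M. \<forall>j\<in>J. Cp j \<omega> \<in> b j}"
    using ZC_split[OF J(2,3) b] by simp
  also have "\<dots> = (\<Prod>j\<in>J. prob {\<omega>\<in>space M. Z j \<omega> \<in> a j}) * (\<Prod>j\<in>J. prob {\<omega>\<in>space M. Cp j \<omega> \<in> b j})"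
    using Z_prod[OF J(2,1,3)] C_prod[OF J(2,1,3) b] by simp
  also have "\<dots> = (\<Prod>j\<in>J. prob (A j))"
    by (simp add: pAj prod.distrib)
  finally show "prob (\<Inter>j\<in>J. A j) = (\<Prod>j\<in>J. prob (A j))" .
qed

lemma unit_prob:
  assumes i: "i < n" and b: "b \<in> sets borel"
  shows "prob (Z i -` {v} \<inter> Cp i -` b \<inter> space M)
       = (if v then p1 else 1 - p1) * measure (distr M borel (Cp 0)) b"
proof -
  have "prob {\<omega>\<in>space M. \<forall>j\<in>{i}. Z j \<omega> \<in> {v} \<and> Cp j \<omega> \<in> b}
       = prob {\<omega>\<in>space M. \<forall>j\<in>{i}. Z j \<omega> \<in> {v}} * prob {\<omega>\<in>space M. \<forall>j\<in>{i}. Cp j \<omega> \<in> b}"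
    by (rule ZC_split[where b="\<lambda>_. b"]) (use i b in auto)
  moreover have "Z i -` {v} \<inter> Cp i -` b \<inter> space M = {\<omega>\<in>space M. \<forall>j\<in>{i}. Z j \<omega> \<in> {v} \<and> Cp j \<omega> \<in> b}"
    by auto
  moreover have "prob {\<omega>\<in>space M. \<forall>j\<in>{i}. Cp j \<omega> \<in> b} = measure (distr M borel (Cp 0)) b"
  proof -
    have "prob {\<omega>\<in>space M. \<forall>j\<in>{i}. Cp j \<omega> \<in> b} = measure (distr M borel (Cp i)) b"
      using measure_distr[OF Cp_meas[OF i] b] by (simp add: vimage_def Int_def conj_commute)
    also have "\<dots> = measure (distr M borel (Cp 0)) b"
      using Cid[OF i] unfolding Cp_def by simp
    finally show ?thesis .
  qed
  moreover have "prob {\<omega>\<in>space M. \<forall>j\<in>{i}. Z j \<omega> \<in> {v}} = (if v then p1 else 1 - p1)"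
  proof -
    have ev: "{\<omega>\<in>space M. Z i \<omega>} \<in> events"
      using measurable_sets[OF Zmeas[OF i], of "{True}"] by (simp add: vimage_def Int_def conj_commute)
    show ?thesis
    proof (cases v)
      case True
      then show ?thesis using Zbern[OF i] by simp
    next
      case False
      have "{\<omega>\<in>space M. \<forall>j\<in>{i}. Z j \<omega> \<in> {v}} = space M - {\<omega>\<in>space M. Z i \<omega>}" using False by auto
      then show ?thesis using prob_compl[OF ev] Zbern[OF i] False by simp
    qed
  qed
  ultimately show ?thesis by simp
qed


definition N1f :: "nat \<Rightarrow> 'a \<Rightarrow> nat" where
  "N1f q \<omega> = Nrisk1 n (\<lambda>j. Z j \<omega>) (W \<omega>) (tpt n T0 q)"

lemma N1f_card: "N1f q \<omega> = card {i\<in>{..<n}. Z i \<omega> \<and> tpt n T0 q \<le> W \<omega> i}"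
  unfolding N1f_def Nrisk1_def ..

end

locale atom = ctx +
  fixes k :: nat and \<omega>0 :: 'a
  assumes k1: "1 \<le> k" and kK: "k \<le> Kdist n T0" and w0: "\<omega>0 \<in> space M"
begin

definition t :: ereal where "t = tpt n T0 k"
definition E :: "'a set" where "E = {\<omega>\<in>space M. \<forall>f\<in>gens (k - 1). f \<omega> = f \<omega>0}"
definition R :: "nat set" where "R = {i\<in>{..<n}. t \<le> W \<omega>0 i}"
definition Out :: "nat set" where "Out = {..<n} - R"
definition m :: nat where "m = card {i\<in>R. Z i \<omega>0}"
definition Dset :: "nat set" where "Dset = {i\<in>R. ereal (T0 i) = t}"
definition zf :: "'a \<Rightarrow> nat set" where "zf \<omega> = {i\<in>R. Z i \<omega>}"
definition Ueq :: "nat \<Rightarrow> nat \<Rightarrow> 'a \<Rightarrow> bool" where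
  "Ueq q i \<omega> \<longleftrightarrow> (tpt n T0 q \<le> W \<omega> i \<longleftrightarrow> tpt n T0 q \<le> W \<omega>0 i)
     \<and> ((Del \<omega> i \<and> W \<omega> i = tpt n T0 q) \<longleftrightarrow> (Del \<omega>0 i \<and> W \<omega>0 i = tpt n T0 q))
     \<and> ((Z i \<omega> \<and> Del \<omega> i \<and> W \<omega> i = tpt n T0 (q - 1)) \<longleftrightarrow> (Z i \<omega>0 \<and> Del \<omega>0 i \<and> W \<omega>0 i = tpt n T0 (q - 1)))"
definition A :: "'a set" where
  "A = {\<omega>\<in>space M. (\<forall>i\<in>Out. \<forall>q\<in>{1..k}. Ueq q i \<omega>)
      \<and> (\<forall>q\<in>{1..k}. card {i\<in>Out. Z i \<omega> \<and> tpt n T0 q \<le> W \<omega> i} + m = N1f q \<omega>0)}"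
definition bset :: "bool \<Rightarrow> (ereal \<times> ereal) set" where
  "bset v = {p. t \<le> (if v then fst p else snd p)}"
definition B :: "nat \<Rightarrow> nat set \<Rightarrow> 'a set" where
  "B i z = Z i -` {i \<in> z} \<inter> Cp i -` bset (i \<in> z) \<inter> space M"

lemma R_sub: "R \<subseteq> {..<n}" unfolding R_def by blast
lemma R_fin: "finite R" using R_sub finite_subset by blast
lemma Out_fin: "finite Out" unfolding Out_def by simp

lemma tq_lt: "q < k \<Longrightarrow> tpt n T0 q < t"
  unfolding t_def using tpt_lt k1 kK by blast

lemma tq_le: "q \<le> k \<Longrightarrow> tpt n T0 q \<le> t"
  using tq_lt[of q] unfolding t_def by (cases "q = k") auto

lemma W_ge: "i < n \<Longrightarrow> (t \<le> W \<omega> i \<longleftrightarrow> t \<le> ereal (T0 i) \<and> t \<le> Cz i \<omega>)"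
  using W_eq by simp

lemma unit_vals:
  assumes i: "i < n" and tw: "t \<le> W \<omega> i" and q: "q \<in> {1..k}"
  shows "tpt n T0 q \<le> W \<omega> i"
    and "(Del \<omega> i \<and> W \<omega> i = tpt n T0 q) \<longleftrightarrow> (q = k \<and> ereal (T0 i) = t)"
    and "\<not> (Z i \<omega> \<and> Del \<omega> i \<and> W \<omega> i = tpt n T0 (q - 1))"
proof -
  show "tpt n T0 q \<le> W \<omega> i" using tq_le[of q] q tw by auto
  show "(Del \<omega> i \<and> W \<omega> i = tpt n T0 q) \<longleftrightarrow> (q = k \<and> ereal (T0 i) = t)"
  proof (cases "q = k")
    case True
    have "(Del \<omega> i \<and> W \<omega> i = t) \<longleftrightarrow> ereal (T0 i) = t"
      using tw W_eq[OF i, of \<omega>] Del_eq[OF i, of \<omega>] by (auto simp: min_def split: if_splits)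
    then show ?thesis using True by (simp add: t_def)
  next
    case False
    then have "tpt n T0 q < t" using q by (intro tq_lt) auto
    then show ?thesis using tw False by auto
  qed
  have "tpt n T0 (q - 1) < t" using q k1 by (intro tq_lt) auto
  then show "\<not> (Z i \<omega> \<and> Del \<omega> i \<and> W \<omega> i = tpt n T0 (q - 1))" using tw by auto
qed

lemma E_iff: "\<omega> \<in> E \<longleftrightarrow> \<omega> \<in> space M \<and> (\<forall>q\<in>{1..k}. \<forall>i\<in>{..<n}. Ueq q i \<omega>) \<and> (\<forall>q\<in>{1..k}. N1f q \<omega> = N1f q \<omega>0)"
proof -
  have kk: "k - 1 + 1 = k" using k1 by simp
  have "(\<forall>f\<in>gens (k - 1). f \<omega> = f \<omega>0) \<longleftrightarrow> (\<forall>q\<in>{1..k}. \<forall>i\<in>{..<n}. Ueq q i \<omega>) \<and> (\<forall>q\<in>{1..k}. N1f q \<omega> = N1f q \<omega>0)"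
  proof
    assume H: "\<forall>f\<in>gens (k - 1). f \<omega> = f \<omega>0"
    have "Ueq q i \<omega>" if q: "q \<in> {1..k}" and i: "i \<in> {..<n}" for q i
    proof -
      have "(\<lambda>\<omega>. of_bool (tpt n T0 q \<le> W \<omega> i) :: nat) \<in> gens (k - 1)"
        "(\<lambda>\<omega>. of_bool (Del \<omega> i \<and> W \<omega> i = tpt n T0 q) :: nat) \<in> gens (k - 1)"
        "(\<lambda>\<omega>. of_bool (Z i \<omega> \<and> Del \<omega> i \<and> W \<omega> i = tpt n T0 (q - 1)) :: nat) \<in> gens (k - 1)"
        unfolding gens_def kk using q i by blast+
      then have "(of_bool (tpt n T0 q \<le> W \<omega> i) :: nat) = of_bool (tpt n T0 q \<le> W \<omega>0 i)"
        "(of_bool (Del \<omega> i \<and> W \<omega> i = tpt n T0 q) :: nat) = of_bool (Del \<omega>0 i \<and> W \<omega>0 i = tpt n T0 q)"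
        "(of_bool (Z i \<omega> \<and> Del \<omega> i \<and> W \<omega> i = tpt n T0 (q - 1)) :: nat) = of_bool (Z i \<omega>0 \<and> Del \<omega>0 i \<and> W \<omega>0 i = tpt n T0 (q - 1))"
        using H by (metis (no_types, lifting))+
      then show ?thesis unfolding Ueq_def of_bool_eq_iff by blast
    qed
    moreover have "N1f q \<omega> = N1f q \<omega>0" if q: "q \<in> {1..k}" for q
    proof -
      have "(\<lambda>\<omega>. Nrisk1 n (\<lambda>j. Z j \<omega>) (W \<omega>) (tpt n T0 q)) \<in> gens (k - 1)"
        unfolding gens_def kk using q by blast
      then show ?thesis using H unfolding N1f_def by (metis (no_types, lifting))
    qed
    ultimately show "(\<forall>q\<in>{1..k}. \<forall>i\<in>{..<n}. Ueq q i \<omega>) \<and> (\<forall>q\<in>{1..k}. N1f q \<omega> = N1f q \<omega>0)" by blast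
  next
    assume H: "(\<forall>q\<in>{1..k}. \<forall>i\<in>{..<n}. Ueq q i \<omega>) \<and> (\<forall>q\<in>{1..k}. N1f q \<omega> = N1f q \<omega>0)"
    show "\<forall>f\<in>gens (k - 1). f \<omega> = f \<omega>0"
    proof
      fix f assume "f \<in> gens (k - 1)"
      then consider (a) q i where "q \<in> {1..k}" "i \<in> {..<n}" "f = (\<lambda>\<omega>. of_bool (tpt n T0 q \<le> W \<omega> i))"
        | (b) q i where "q \<in> {1..k}" "i \<in> {..<n}" "f = (\<lambda>\<omega>. of_bool (Del \<omega> i \<and> W \<omega> i = tpt n T0 q))"
        | (c) q i where "q \<in> {1..k}" "i \<in> {..<n}" "f = (\<lambda>\<omega>. of_bool (Z i \<omega> \<and> Del \<omega> i \<and> W \<omega> i = tpt n T0 (q - 1)))"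
        | (d) q where "q \<in> {1..k}" "f = (\<lambda>\<omega>. Nrisk1 n (\<lambda>j. Z j \<omega>) (W \<omega>) (tpt n T0 q))"
        unfolding gens_def kk by blast
      then show "f \<omega> = f \<omega>0"
      proof cases
        case (a q i) then show ?thesis using H unfolding Ueq_def by simp
      next
        case (b q i) then show ?thesis using H unfolding Ueq_def by simp
      next
        case (c q i) then show ?thesis using H unfolding Ueq_def by simp
      next
        case (d q) then show ?thesis using H unfolding N1f_def by simp
      qed
    qed
  qed
  then show ?thesis unfolding E_def by blast
qed

lemma E_events: "E \<in> events"
proof -
  have "Measurable.pred M (\<lambda>\<omega>. \<forall>f\<in>gens (k - 1). f \<omega> = f \<omega>0)"
  proof (rule pred_intros_finite(3)[OF gens_finite])
    fix f assume "f \<in> gens (k - 1)"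
    show "Measurable.pred M (\<lambda>\<omega>. f \<omega> = f \<omega>0)"
      by (rule pred_eq_const1[OF gens_meas[OF \<open>f \<in> gens (k - 1)\<close>]]) simp
  qed
  then show ?thesis unfolding E_def by (rule predE)
qed

lemma T0R: "i \<in> R \<Longrightarrow> t \<le> ereal (T0 i)"
  unfolding R_def using W_ge by blast

lemma R_unit:
  assumes i: "i \<in> R"
  shows "(\<forall>q\<in>{1..k}. Ueq q i \<omega>) \<longleftrightarrow> t \<le> W \<omega> i"
proof
  assume "\<forall>q\<in>{1..k}. Ueq q i \<omega>"
  then have "Ueq k i \<omega>" using k1 by auto
  then show "t \<le> W \<omega> i" using i unfolding Ueq_def R_def t_def by auto
next
  assume tw: "t \<le> W \<omega> i"
  have i': "i < n" "t \<le> W \<omega>0 i" using i unfolding R_def by auto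
  show "\<forall>q\<in>{1..k}. Ueq q i \<omega>"
  proof
    fix q assume q: "q \<in> {1..k}"
    show "Ueq q i \<omega>"
      unfolding Ueq_def using unit_vals[OF i'(1) tw q] unit_vals[OF i'(1) i'(2) q] by blast
  qed
qed

lemma B_iff:
  assumes i: "i \<in> R" and w: "\<omega> \<in> space M"
  shows "\<omega> \<in> B i z \<longleftrightarrow> (Z i \<omega> = (i \<in> z) \<and> t \<le> W \<omega> i)"
proof -
  have i': "i < n" using i R_sub by auto
  have "t \<le> W \<omega> i \<longleftrightarrow> t \<le> Cz i \<omega>" using W_ge[OF i'] T0R[OF i] by blast
  then show ?thesis using w unfolding B_def bset_def Cz_def Cp_def by auto
qed

lemma N1_split:
  assumes w: "\<forall>i\<in>R. t \<le> W \<omega> i" and q: "q \<in> {1..k}"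
  shows "N1f q \<omega> = card (zf \<omega>) + card {i\<in>Out. Z i \<omega> \<and> tpt n T0 q \<le> W \<omega> i}"
proof -
  have "{i\<in>{..<n}. Z i \<omega> \<and> tpt n T0 q \<le> W \<omega> i} = zf \<omega> \<union> {i\<in>Out. Z i \<omega> \<and> tpt n T0 q \<le> W \<omega> i}"
  proof -
    have "tpt n T0 q \<le> W \<omega> i" if "i \<in> R" for i
      using tq_le[of q] q w that by (meson atLeastAtMost_iff order.trans)
    then show ?thesis unfolding zf_def Out_def using R_sub by auto
  qed
  moreover have "zf \<omega> \<inter> {i\<in>Out. Z i \<omega> \<and> tpt n T0 q \<le> W \<omega> i} = {}"
    unfolding zf_def Out_def by auto
  moreover have "finite (zf \<omega>)" unfolding zf_def using R_fin by simp
  moreover have "finite {i\<in>Out. Z i \<omega> \<and> tpt n T0 q \<le> W \<omega> i}" using Out_fin by simp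
  ultimately show ?thesis unfolding N1f_card by (simp add: card_Un_disjoint)
qed

lemma Out_empty_k:
  assumes "\<omega> \<in> E"
  shows "{i\<in>Out. Z i \<omega> \<and> t \<le> W \<omega> i} = {}"
proof -
  have "Ueq k i \<omega>" if "i \<in> Out" for i
    using assms that k1 unfolding E_iff Out_def by auto
  then show ?thesis unfolding Ueq_def Out_def R_def t_def by auto
qed

lemma w0E: "\<omega>0 \<in> E"
  using w0 unfolding E_iff Ueq_def by simp

lemma E_R: "\<omega> \<in> E \<Longrightarrow> \<forall>i\<in>R. t \<le> W \<omega> i"
  using R_unit R_sub unfolding E_iff by blast

lemma N1f_k: "\<omega> \<in> E \<Longrightarrow> N1f k \<omega> = card (zf \<omega>)"
  using N1_split[OF E_R, of \<omega> k] Out_empty_k[of \<omega>, unfolded t_def] k1 by simp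

lemma zf_card: "\<omega> \<in> E \<Longrightarrow> card (zf \<omega>) = m"
proof -
  assume e: "\<omega> \<in> E"
  have "N1f k \<omega> = N1f k \<omega>0" using e k1 unfolding E_iff by auto
  then show ?thesis using N1f_k[OF e] N1f_k[OF w0E] unfolding m_def zf_def by simp
qed

lemma zf_sub: "zf \<omega> \<subseteq> R" unfolding zf_def by blast

lemma Ez_eq:
  assumes z: "z \<subseteq> R" "card z = m"
  shows "E \<inter> {\<omega>. zf \<omega> = z} = A \<inter> (\<Inter>i\<in>R. B i z)"
proof (intro equalityI subsetI)
  fix \<omega> assume "\<omega> \<in> E \<inter> {\<omega>. zf \<omega> = z}"
  then have e: "\<omega> \<in> E" and zz: "zf \<omega> = z" by auto
  have sp: "\<omega> \<in> space M" using e unfolding E_def by blast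
  have tR: "\<forall>i\<in>R. t \<le> W \<omega> i" using E_R[OF e] .
  have "\<forall>i\<in>Out. \<forall>q\<in>{1..k}. Ueq q i \<omega>" using e unfolding E_iff Out_def by blast
  moreover have "\<forall>q\<in>{1..k}. card {i\<in>Out. Z i \<omega> \<and> tpt n T0 q \<le> W \<omega> i} + m = N1f q \<omega>0"
  proof
    fix q assume q: "q \<in> {1..k}"
    have "N1f q \<omega> = N1f q \<omega>0" using e q unfolding E_iff by blast
    then show "card {i\<in>Out. Z i \<omega> \<and> tpt n T0 q \<le> W \<omega> i} + m = N1f q \<omega>0"
      using N1_split[OF tR q] zz z by simp
  qed
  ultimately have "\<omega> \<in> A" using sp unfolding A_def by blast
  moreover have "\<omega> \<in> B i z" if "i \<in> R" for i
    using B_iff[OF that sp] tR that zz unfolding zf_def by blast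
  ultimately show "\<omega> \<in> A \<inter> (\<Inter>i\<in>R. B i z)" by blast
next
  fix \<omega> assume w: "\<omega> \<in> A \<inter> (\<Inter>i\<in>R. B i z)"
  have sp: "\<omega> \<in> space M" using w unfolding A_def by blast
  have Bi: "Z i \<omega> = (i \<in> z) \<and> t \<le> W \<omega> i" if "i \<in> R" for i
    using B_iff[OF that sp] w that by blast
  have zz: "zf \<omega> = z" using Bi z(1) unfolding zf_def by blast
  have tR: "\<forall>i\<in>R. t \<le> W \<omega> i" using Bi by blast
  have U: "\<forall>q\<in>{1..k}. \<forall>i\<in>{..<n}. Ueq q i \<omega>"
  proof (intro ballI)
    fix q i assume q: "q \<in> {1..k}" and i: "i \<in> {..<n}"
    show "Ueq q i \<omega>"
    proof (cases "i \<in> R")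
      case True
      then show ?thesis using R_unit[OF True, of \<omega>] tR q by blast
    next
      case False
      then have "i \<in> Out" using i unfolding Out_def by blast
      then show ?thesis using w q unfolding A_def by blast
    qed
  qed
  have N: "\<forall>q\<in>{1..k}. N1f q \<omega> = N1f q \<omega>0"
  proof
    fix q assume q: "q \<in> {1..k}"
    have "card {i\<in>Out. Z i \<omega> \<and> tpt n T0 q \<le> W \<omega> i} + m = N1f q \<omega>0"
      using w q unfolding A_def by blast
    then show "N1f q \<omega> = N1f q \<omega>0" using N1_split[OF tR q] zz z by simp
  qed
  have "\<omega> \<in> E" unfolding E_iff using sp U N by blast
  then show "\<omega> \<in> E \<inter> {\<omega>. zf \<omega> = z}" using zz by blast
qed

lemma A_meas: "A \<in> sigma_sets (space M) (\<Union>i\<in>Out. Eu i)"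
proof -
  let ?G = "\<Union>i\<in>Out. Eu i"
  let ?N = "sigma (space M) ?G"
  have sub: "?G \<subseteq> Pow (space M)" unfolding Eu_def by blast
  have sN: "sets ?N = sigma_sets (space M) ?G" by (rule sets_measure_of[OF sub])
  have spN: "space ?N = space M" by (rule space_measure_of[OF sub])
  have Zm: "Z i \<in> measurable ?N (count_space UNIV)" if i: "i \<in> Out" for i
  proof (rule measurableI)
    fix a :: "bool set"
    have "Z i -` a \<inter> space M = Z i -` a \<inter> Cp i -` UNIV \<inter> space M" by blast
    also have "\<dots> \<in> Eu i"
    proof -
      have "UNIV \<in> sets (borel :: (ereal \<times> ereal) measure)" by simp
      then show ?thesis unfolding Eu_def by blast
    qed
    finally have "Z i -` a \<inter> space M \<in> ?G" using i by blast
    then show "Z i -` a \<inter> space ?N \<in> sets ?N" unfolding sN spN by (rule sigma_sets.Basic)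
  qed (simp only: space_count_space UNIV_I)
  have Cm: "Cp i \<in> borel_measurable ?N" if i: "i \<in> Out" for i
  proof (rule measurableI)
    fix b :: "(ereal \<times> ereal) set" assume b: "b \<in> sets borel"
    have "Cp i -` b \<inter> space M = Z i -` UNIV \<inter> Cp i -` b \<inter> space M" by blast
    also have "\<dots> \<in> Eu i" unfolding Eu_def using b by blast
    finally have "Cp i -` b \<inter> space M \<in> ?G" using i by blast
    then show "Cp i -` b \<inter> space ?N \<in> sets ?N" unfolding sN spN by (rule sigma_sets.Basic)
  qed (simp only: space_borel UNIV_I)
  have P1: "Measurable.pred ?N (\<lambda>\<omega>. \<forall>i\<in>Out. \<forall>q\<in>{1..k}. Ueq q i \<omega>)"
  proof (rule pred_intros_finite(3)[OF Out_fin])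
    fix i assume i: "i \<in> Out"
    note [measurable] = meas_gen[OF Zm[OF i] Cm[OF i]]
    show "Measurable.pred ?N (\<lambda>\<omega>. \<forall>q\<in>{1..k}. Ueq q i \<omega>)"
    proof (rule pred_intros_finite(3))
      fix q assume "q \<in> {1..k}"
      show "Measurable.pred ?N (\<lambda>\<omega>. Ueq q i \<omega>)" unfolding Ueq_def by measurable
    qed simp
  qed
  have P2: "Measurable.pred ?N (\<lambda>\<omega>. \<forall>q\<in>{1..k}. card {i\<in>Out. Z i \<omega> \<and> tpt n T0 q \<le> W \<omega> i} + m = N1f q \<omega>0)"
  proof (rule pred_intros_finite(3))
    fix q assume "q \<in> {1..k}"
    have c: "(\<lambda>\<omega>. card {i\<in>Out. Z i \<omega> \<and> tpt n T0 q \<le> W \<omega> i}) \<in> measurable ?N (count_space UNIV)"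
    proof (rule meas_card[OF Out_fin])
      fix i assume i: "i \<in> Out"
      note [measurable] = meas_gen[OF Zm[OF i] Cm[OF i]]
      show "Measurable.pred ?N (\<lambda>\<omega>. Z i \<omega> \<and> tpt n T0 q \<le> W \<omega> i)" by measurable
    qed
    have c2: "(\<lambda>\<omega>. card {i\<in>Out. Z i \<omega> \<and> tpt n T0 q \<le> W \<omega> i} + m) \<in> measurable ?N (count_space UNIV)"
      by (rule measurable_compose[OF c, where g="\<lambda>x. x + m"]) (rule measurable_count_space)
    show "Measurable.pred ?N (\<lambda>\<omega>. card {i\<in>Out. Z i \<omega> \<and> tpt n T0 q \<le> W \<omega> i} + m = N1f q \<omega>0)"
      by (rule pred_eq_const1[OF c2]) simp
  qed simp
  have "Measurable.pred ?N (\<lambda>\<omega>. (\<forall>i\<in>Out. \<forall>q\<in>{1..k}. Ueq q i \<omega>)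
      \<and> (\<forall>q\<in>{1..k}. card {i\<in>Out. Z i \<omega> \<and> tpt n T0 q \<le> W \<omega> i} + m = N1f q \<omega>0))"
    by (rule pred_intros_logic(3)[OF P1 P2])
  then have "{\<omega>\<in>space ?N. (\<forall>i\<in>Out. \<forall>q\<in>{1..k}. Ueq q i \<omega>)
      \<and> (\<forall>q\<in>{1..k}. card {i\<in>Out. Z i \<omega> \<and> tpt n T0 q \<le> W \<omega> i} + m = N1f q \<omega>0)} \<in> sets ?N"
    by (rule predE)
  then show ?thesis unfolding A_def sN spN .
qed

lemma bset_borel: "bset v \<in> sets borel"
proof -
  have "closed (bset v)"
    unfolding bset_def by (cases v) (auto intro!: closed_Collect_le continuous_intros)
  then show ?thesis by (rule borel_closed)
qed

lemma B_Eu: "i \<in> R \<Longrightarrow> B i z \<in> Eu i"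
  unfolding B_def Eu_def using bset_borel by blast

lemma indep_AB: "prob (A \<inter> (\<Inter>i\<in>R. B i z)) = prob A * (\<Prod>i\<in>R. prob (B i z))"
proof -
  define I where "I j = (case j of None \<Rightarrow> Out | Some i \<Rightarrow> {i})" for j :: "nat option"
  define J where "J = insert None (Some ` R)"
  define S where "S j = (case j of None \<Rightarrow> A | Some i \<Rightarrow> B i z)" for j :: "nat option"
  have UJ: "(\<Union>j\<in>J. I j) \<subseteq> {..<n}" unfolding I_def J_def Out_def using R_sub by auto
  have ind: "indep_sets Eu (\<Union>j\<in>J. I j)" by (rule indep_sets_mono_index[OF UJ unit_indep])
  have dis: "disjoint_family_on I J"
    unfolding disjoint_family_on_def I_def J_def Out_def by (auto split: option.splits)
  have col: "indep_sets (\<lambda>j. sigma_sets (space M) (\<Union>i\<in>I j. Eu i)) J"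
    by (rule indep_sets_collect_sigma[OF ind _ dis]) (rule Eu_stable)
  have fJ: "finite J" unfolding J_def using R_fin by simp
  have mem: "\<forall>j\<in>J. S j \<in> sigma_sets (space M) (\<Union>i\<in>I j. Eu i)"
  proof
    fix j assume "j \<in> J"
    then show "S j \<in> sigma_sets (space M) (\<Union>i\<in>I j. Eu i)"
    proof (cases j)
      case None
      then show ?thesis unfolding S_def I_def using A_meas by simp
    next
      case (Some i)
      then have "i \<in> R" using \<open>j \<in> J\<close> unfolding J_def by auto
      then have "B i z \<in> (\<Union>i'\<in>{i}. Eu i')" using B_Eu by blast
      then show ?thesis unfolding S_def I_def using Some by (auto intro: sigma_sets.Basic)
    qed
  qed
  have "prob (\<Inter>j\<in>J. S j) = (\<Prod>j\<in>J. prob (S j))"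
    by (rule indep_setsD[OF col subset_refl _ fJ mem]) (simp add: J_def)
  moreover have "(\<Inter>j\<in>J. S j) = A \<inter> (\<Inter>i\<in>R. B i z)" unfolding J_def S_def by auto
  moreover have "(\<Prod>j\<in>J. prob (S j)) = prob A * (\<Prod>i\<in>R. prob (B i z))"
  proof -
    have "(\<Prod>j\<in>J. prob (S j)) = prob (S None) * (\<Prod>j\<in>Some ` R. prob (S j))"
      unfolding J_def using R_fin by (subst prod.insert) auto
    also have "(\<Prod>j\<in>Some ` R. prob (S j)) = (\<Prod>i\<in>R. prob (S (Some i)))"
      by (subst prod.reindex) auto
    finally show ?thesis unfolding S_def by simp
  qed
  ultimately show ?thesis by simp
qed

definition \<alpha> :: real where "\<alpha> = p1 * measure (distr M borel (Cp 0)) (bset True)"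
definition \<beta> :: real where "\<beta> = (1 - p1) * measure (distr M borel (Cp 0)) (bset False)"

lemma B_prob: "i \<in> R \<Longrightarrow> prob (B i z) = (if i \<in> z then \<alpha> else \<beta>)"
proof -
  assume i: "i \<in> R"
  then have i': "i < n" using R_sub by auto
  show ?thesis unfolding B_def using unit_prob[OF i' bset_borel, of "i \<in> z" "i \<in> z"]
    by (cases "i \<in> z") (simp_all add: \<alpha>_def \<beta>_def)
qed

definition c :: real where "c = prob A * \<alpha> ^ m * \<beta> ^ (card R - m)"

lemma Ez_prob:
  assumes z: "z \<subseteq> R" "card z = m"
  shows "prob (E \<inter> {\<omega>. zf \<omega> = z}) = c"
proof -
  have "(\<Prod>i\<in>R. prob (B i z)) = (\<Prod>i\<in>R. if i \<in> z then \<alpha> else \<beta>)"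
    using B_prob by (intro prod.cong) auto
  also have "\<dots> = \<alpha> ^ card (R \<inter> z) * \<beta> ^ card (R - z)"
    using R_fin by (simp add: prod.If_cases Diff_eq)
  also have "R \<inter> z = z" using z by blast
  also have "card (R - z) = card R - m" using z R_fin by (simp add: card_Diff_subset finite_subset)
  finally show ?thesis unfolding Ez_eq[OF z] indep_AB c_def using z by simp
qed


definition Zs :: "nat set set" where "Zs = {z. z \<subseteq> R \<and> card z = m}"

lemma Zs_fin: "finite Zs"
  unfolding Zs_def by (rule finite_subset[of _ "Pow R"]) (use R_fin in auto)

lemma Zs_card: "card Zs = card R choose m"
  unfolding Zs_def using n_subsets[OF R_fin] by simp

lemma Ez_events: "E \<inter> {\<omega>. zf \<omega> = z} \<in> events" if z: "z \<subseteq> R" for z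
proof -
  have "E \<inter> {\<omega>. zf \<omega> = z} = E \<inter> {\<omega>\<in>space M. \<forall>i\<in>R. Z i \<omega> = (i \<in> z)}"
    using z E_events sets.sets_into_space unfolding zf_def by blast
  moreover have "Measurable.pred M (\<lambda>\<omega>. \<forall>i\<in>R. Z i \<omega> = (i \<in> z))"
  proof (rule pred_intros_finite(3)[OF R_fin])
    fix i assume "i \<in> R"
    then have i: "i < n" using R_sub by auto
    note [measurable] = measM(3)[OF i i]
    show "Measurable.pred M (\<lambda>\<omega>. Z i \<omega> = (i \<in> z))" by measurable
  qed
  ultimately show ?thesis using E_events by (auto intro: sets.Int predE)
qed

lemma int_formula:
  fixes \<phi> :: "nat set \<Rightarrow> real"
  shows "(\<integral>\<omega>. \<phi> (zf \<omega>) * indicator E \<omega> \<partial>M) = c * (\<Sum>z\<in>Zs. \<phi> z)"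
proof -
  have pt: "\<phi> (zf \<omega>) * indicator E \<omega> = (\<Sum>z\<in>Zs. \<phi> z * indicator (E \<inter> {\<omega>. zf \<omega> = z}) \<omega>)" for \<omega>
  proof (cases "\<omega> \<in> E")
    case True
    have zs: "zf \<omega> \<in> Zs" unfolding Zs_def using zf_sub zf_card[OF True] by blast
    have "(\<Sum>z\<in>Zs. \<phi> z * indicator (E \<inter> {\<omega>. zf \<omega> = z}) \<omega>) = (\<Sum>z\<in>Zs. if zf \<omega> = z then \<phi> z else 0)"
      using True by (intro sum.cong refl) (auto simp: indicator_def)
    also have "\<dots> = \<phi> (zf \<omega>)" using Zs_fin zs by (simp add: sum.delta)
    finally show ?thesis using True by simp
  next
    case False
    then show ?thesis by (simp add: indicator_def)
  qed
  have "(\<integral>\<omega>. \<phi> (zf \<omega>) * indicator E \<omega> \<partial>M) = (\<integral>\<omega>. (\<Sum>z\<in>Zs. \<phi> z * indicator (E \<inter> {\<omega>. zf \<omega> = z}) \<omega>) \<partial>M)"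
    by (simp only: pt)
  also have "\<dots> = (\<Sum>z\<in>Zs. \<integral>\<omega>. \<phi> z * indicator (E \<inter> {\<omega>. zf \<omega> = z}) \<omega> \<partial>M)"
  proof (rule Bochner_Integration.integral_sum[where f="\<lambda>z \<omega>. \<phi> z * indicator (E \<inter> {\<omega>. zf \<omega> = z}) \<omega>"])
    fix z assume "z \<in> Zs"
    then have "E \<inter> {\<omega>. zf \<omega> = z} \<in> events" unfolding Zs_def by (intro Ez_events) auto
    then show "integrable M (\<lambda>\<omega>. \<phi> z * indicator (E \<inter> {\<omega>. zf \<omega> = z}) \<omega>)"
      by (intro integrable_mult_right integrable_real_indicator) (auto simp: less_top[symmetric] emeasure_finite)
  qed
  also have "\<dots> = (\<Sum>z\<in>Zs. \<phi> z * c)"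
  proof (intro sum.cong refl)
    fix z assume "z \<in> Zs"
    then have z: "z \<subseteq> R" "card z = m" unfolding Zs_def by auto
    have ev: "E \<inter> {\<omega>. zf \<omega> = z} \<in> events" using Ez_events z by blast
    have "(\<integral>\<omega>. \<phi> z * indicator (E \<inter> {\<omega>. zf \<omega> = z}) \<omega> \<partial>M) = \<phi> z * prob (E \<inter> {\<omega>. zf \<omega> = z})"
      using ev by simp
    then show "(\<integral>\<omega>. \<phi> z * indicator (E \<inter> {\<omega>. zf \<omega> = z}) \<omega> \<partial>M) = \<phi> z * c"
      using Ez_prob[OF z] by simp
  qed
  also have "\<dots> = c * (\<Sum>z\<in>Zs. \<phi> z)" by (simp add: sum_distrib_right mult.commute)
  finally show ?thesis .
qed

lemma prob_E: "prob E = c * real (card R choose m)"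
proof -
  have "(\<integral>\<omega>. (\<lambda>_. 1::real) (zf \<omega>) * indicator E \<omega> \<partial>M) = c * (\<Sum>z\<in>Zs. (\<lambda>_. 1::real) z)"
    by (rule int_formula)
  then show ?thesis using E_events Zs_card by simp
qed

lemma m_le: "m \<le> card R"
  unfolding m_def by (rule card_mono[OF R_fin]) auto

lemma E_tw: "\<omega> \<in> E \<Longrightarrow> i < n \<Longrightarrow> (t \<le> W \<omega> i \<longleftrightarrow> i \<in> R)"
proof -
  assume e: "\<omega> \<in> E" and i: "i < n"
  show ?thesis
  proof (cases "i \<in> R")
    case True then show ?thesis using E_R[OF e] by blast
  next
    case False
    have "Ueq k i \<omega>" using e i k1 unfolding E_iff by auto
    then show ?thesis using False i unfolding Ueq_def R_def t_def by auto
  qed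
qed

lemma E_dw: "\<omega> \<in> E \<Longrightarrow> i < n \<Longrightarrow> ((Del \<omega> i \<and> W \<omega> i = t) \<longleftrightarrow> i \<in> Dset)"
proof -
  assume e: "\<omega> \<in> E" and i: "i < n"
  show ?thesis
  proof (cases "t \<le> W \<omega> i")
    case True
    then have "i \<in> R" using E_tw[OF e i] by blast
    then show ?thesis using unit_vals(2)[OF i True, of k] k1 unfolding Dset_def t_def by auto
  next
    case False
    then have "i \<notin> R" using E_tw[OF e i] by blast
    then show ?thesis using False unfolding Dset_def by auto
  qed
qed

lemma Dev1_E: "\<omega> \<in> E \<Longrightarrow> Dev1 n (\<lambda>i. Z i \<omega>) (W \<omega>) (Del \<omega>) t = card (zf \<omega> \<inter> Dset)"
proof -
  assume e: "\<omega> \<in> E"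
  have "{i \<in> {..<n}. Z i \<omega> \<and> Del \<omega> i \<and> W \<omega> i = t} = zf \<omega> \<inter> Dset"
    using E_dw[OF e] R_sub unfolding zf_def Dset_def by auto
  then show ?thesis unfolding Dev1_def by simp
qed

lemma Dev_E: "\<omega> \<in> E \<Longrightarrow> Dev n (W \<omega>) (Del \<omega>) t = card Dset"
proof -
  assume e: "\<omega> \<in> E"
  have "{i \<in> {..<n}. Del \<omega> i \<and> W \<omega> i = t} = Dset"
    using E_dw[OF e] R_sub unfolding Dset_def by auto
  then show ?thesis unfolding Dev_def by simp
qed

lemma Nrisk1_E: "\<omega> \<in> E \<Longrightarrow> Nrisk1 n (\<lambda>i. Z i \<omega>) (W \<omega>) t = m"
  using N1f_k zf_card unfolding N1f_def t_def by simp

lemma Nrisk_E: "\<omega> \<in> E \<Longrightarrow> Nrisk n (\<lambda>i. Z i \<omega>) (W \<omega>) t = card R"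
proof -
  assume e: "\<omega> \<in> E"
  have "Nrisk n (\<lambda>i. Z i \<omega>) (W \<omega>) t = card {i\<in>{..<n}. t \<le> W \<omega> i}"
    unfolding Nrisk_def Nrisk1_def Nrisk0_def
    by (subst card_Un_disjoint[symmetric]) (auto intro!: arg_cong[where f=card])
  also have "{i\<in>{..<n}. t \<le> W \<omega> i} = R" using E_tw[OF e] R_sub by auto
  finally show ?thesis .
qed


lemma Dset_sub: "Dset \<subseteq> R" unfolding Dset_def by blast

lemma atom_ii:
  "(\<integral>\<omega>. of_bool (Dev1 n (\<lambda>i. Z i \<omega>) (W \<omega>) (Del \<omega>) (tpt n T0 k) = j) * indicator E \<omega> \<partial>M)
 = (\<integral>\<omega>. hgeom_pmf (Nrisk n (\<lambda>i. Z i \<omega>) (W \<omega>) (tpt n T0 k)) (Dev n (W \<omega>) (Del \<omega>) (tpt n T0 k))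
          (Nrisk1 n (\<lambda>i. Z i \<omega>) (W \<omega>) (tpt n T0 k)) j * indicator E \<omega> \<partial>M)"
proof -
  define H where "H = hgeom_pmf (card R) (card Dset) m j"
  define \<phi> where "\<phi> z = (of_bool (card (z \<inter> Dset) = j) :: real)" for z
  have L: "(\<integral>\<omega>. of_bool (Dev1 n (\<lambda>i. Z i \<omega>) (W \<omega>) (Del \<omega>) (tpt n T0 k) = j) * indicator E \<omega> \<partial>M)
      = (\<integral>\<omega>. \<phi> (zf \<omega>) * indicator E \<omega> \<partial>M)"
  proof (rule Bochner_Integration.integral_cong[OF refl])
    fix \<omega> show "of_bool (Dev1 n (\<lambda>i. Z i \<omega>) (W \<omega>) (Del \<omega>) (tpt n T0 k) = j) * indicator E \<omega> = \<phi> (zf \<omega>) * indicator E \<omega>"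
      using Dev1_E[of \<omega>] unfolding \<phi>_def t_def by (cases "\<omega> \<in> E") auto
  qed
  have Rt: "(\<integral>\<omega>. hgeom_pmf (Nrisk n (\<lambda>i. Z i \<omega>) (W \<omega>) (tpt n T0 k)) (Dev n (W \<omega>) (Del \<omega>) (tpt n T0 k))
          (Nrisk1 n (\<lambda>i. Z i \<omega>) (W \<omega>) (tpt n T0 k)) j * indicator E \<omega> \<partial>M) = (\<integral>\<omega>. H * indicator E \<omega> \<partial>M)"
  proof (rule Bochner_Integration.integral_cong[OF refl])
    fix \<omega> show "hgeom_pmf (Nrisk n (\<lambda>i. Z i \<omega>) (W \<omega>) (tpt n T0 k)) (Dev n (W \<omega>) (Del \<omega>) (tpt n T0 k))
          (Nrisk1 n (\<lambda>i. Z i \<omega>) (W \<omega>) (tpt n T0 k)) j * indicator E \<omega> = H * indicator E \<omega>"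
      using Nrisk_E[of \<omega>] Dev_E[of \<omega>] Nrisk1_E[of \<omega>] unfolding H_def t_def by (cases "\<omega> \<in> E") auto
  qed
  have Rt2: "(\<integral>\<omega>. H * indicator E \<omega> \<partial>M) = H * prob E" using E_events by simp
  have S: "(\<Sum>z\<in>Zs. \<phi> z) = real (card {z. z \<subseteq> R \<and> card z = m \<and> card (z \<inter> Dset) = j})"
  proof -
    have "(\<Sum>z\<in>Zs. \<phi> z) = real (card (Zs \<inter> {z. card (z \<inter> Dset) = j}))"
      unfolding \<phi>_def using Zs_fin by simp
    also have "Zs \<inter> {z. card (z \<inter> Dset) = j} = {z. z \<subseteq> R \<and> card z = m \<and> card (z \<inter> Dset) = j}"
      unfolding Zs_def by blast
    finally show ?thesis .
  qed
  have pos: "(card R choose m) > 0" using m_le by simp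
  show ?thesis
  proof (cases "j \<le> m")
    case True
    have cnt: "card {z. z \<subseteq> R \<and> card z = m \<and> card (z \<inter> Dset) = j}
       = (card Dset choose j) * ((card R - card Dset) choose (m - j))"
      by (rule count_split[OF R_fin Dset_sub True])
    have "H = real ((card Dset choose j) * ((card R - card Dset) choose (m - j))) / real (card R choose m)"
      unfolding H_def hgeom_pmf_def using True by simp
    then have "H * prob E = c * real ((card Dset choose j) * ((card R - card Dset) choose (m - j)))"
      unfolding prob_E using pos by (simp add: field_simps)
    then show ?thesis unfolding L Rt Rt2 int_formula S cnt by simp
  next
    case False
    have emp: "{z. z \<subseteq> R \<and> card z = m \<and> card (z \<inter> Dset) = j} = {}"
    proof (rule equals0I)
      fix z assume z: "z \<in> {z. z \<subseteq> R \<and> card z = m \<and> card (z \<inter> Dset) = j}"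
      then have "finite z" using R_fin finite_subset by blast
      then have "card (z \<inter> Dset) \<le> card z" by (intro card_mono) auto
      then show False using z False by simp
    qed
    have cnt0: "card {z. z \<subseteq> R \<and> card z = m \<and> card (z \<inter> Dset) = j} = 0"
      by (simp only: emp card.empty)
    have H0: "H = 0" unfolding H_def hgeom_pmf_def using False by simp
    show ?thesis unfolding L Rt Rt2 int_formula S cnt0 H0 by simp
  qed
qed

lemma atom_i:
  "(\<integral>\<omega>. (real (Dev1 n (\<lambda>i. Z i \<omega>) (W \<omega>) (Del \<omega>) (tpt n T0 k)) - Mexp n (\<lambda>i. Z i \<omega>) (W \<omega>) (Del \<omega>) (tpt n T0 k))
      * indicator E \<omega> \<partial>M) = (\<integral>\<omega>. 0 * indicator E \<omega> \<partial>M)"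
proof -
  define \<phi> where "\<phi> z = real (card (z \<inter> Dset)) - real (card Dset) * real m / real (card R)" for z
  have L: "(\<integral>\<omega>. (real (Dev1 n (\<lambda>i. Z i \<omega>) (W \<omega>) (Del \<omega>) (tpt n T0 k)) - Mexp n (\<lambda>i. Z i \<omega>) (W \<omega>) (Del \<omega>) (tpt n T0 k))
      * indicator E \<omega> \<partial>M) = (\<integral>\<omega>. \<phi> (zf \<omega>) * indicator E \<omega> \<partial>M)"
  proof (rule Bochner_Integration.integral_cong[OF refl])
    fix \<omega> show "(real (Dev1 n (\<lambda>i. Z i \<omega>) (W \<omega>) (Del \<omega>) (tpt n T0 k)) - Mexp n (\<lambda>i. Z i \<omega>) (W \<omega>) (Del \<omega>) (tpt n T0 k))
      * indicator E \<omega> = \<phi> (zf \<omega>) * indicator E \<omega>"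
      using Dev1_E[of \<omega>] Dev_E[of \<omega>] Nrisk1_E[of \<omega>] Nrisk_E[of \<omega>] unfolding \<phi>_def t_def Mexp_def
      by (cases "\<omega> \<in> E") auto
  qed
  have "(\<Sum>z\<in>Zs. \<phi> z) = 0"
  proof (cases "card R = 0")
    case True
    then have "R = {}" using R_fin by simp
    then have "Dset = {}" using Dset_sub by blast
    then show ?thesis unfolding \<phi>_def by simp
  next
    case False
    have sc: "(\<Sum>z\<in>Zs. card (z \<inter> Dset)) * card R = card Dset * m * (card R choose m)"
      unfolding Zs_def by (rule sum_card_inter[OF R_fin Dset_sub])
    have "(\<Sum>z\<in>Zs. real (card (z \<inter> Dset))) * real (card R) = real (card Dset) * real m * real (card R choose m)"
      using arg_cong[OF sc, of real] by simp
    then have e: "(\<Sum>z\<in>Zs. real (card (z \<inter> Dset))) = real (card Dset) * real m * real (card R choose m) / real (card R)"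
      using False by (simp add: field_simps)
    have "(\<Sum>z\<in>Zs. \<phi> z) = (\<Sum>z\<in>Zs. real (card (z \<inter> Dset))) - real (card Zs) * (real (card Dset) * real m / real (card R))"
      unfolding \<phi>_def by (simp add: sum_subtractf)
    then show ?thesis unfolding e Zs_card by simp
  qed
  then show ?thesis unfolding L int_formula by simp
qed

end

lemma meas4:
  fixes f :: "nat \<Rightarrow> nat \<Rightarrow> nat \<Rightarrow> nat \<Rightarrow> real"
  assumes s1: "s1 \<in> measurable N (count_space UNIV)" and s2: "s2 \<in> measurable N (count_space UNIV)"
    and s3: "s3 \<in> measurable N (count_space UNIV)" and s4: "s4 \<in> measurable N (count_space UNIV)"
  shows "(\<lambda>\<omega>. f (s1 \<omega>) (s2 \<omega>) (s3 \<omega>) (s4 \<omega>)) \<in> borel_measurable N"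
proof -
  have l4: "(\<lambda>\<omega>. f a b c (s4 \<omega>)) \<in> borel_measurable N" for a b c
    by (rule measurable_compose_countable[where f="\<lambda>d \<omega>. f a b c d" and g=s4, OF _ s4]) simp
  have l3: "(\<lambda>\<omega>. f a b (s3 \<omega>) (s4 \<omega>)) \<in> borel_measurable N" for a b
    by (rule measurable_compose_countable[where f="\<lambda>c \<omega>. f a b c (s4 \<omega>)" and g=s3, OF l4 s3])
  have l2: "(\<lambda>\<omega>. f a (s2 \<omega>) (s3 \<omega>) (s4 \<omega>)) \<in> borel_measurable N" for a
    by (rule measurable_compose_countable[where f="\<lambda>b \<omega>. f a b (s3 \<omega>) (s4 \<omega>)" and g=s2, OF l3 s2])
  show ?thesis
    by (rule measurable_compose_countable[where f="\<lambda>a \<omega>. f a (s2 \<omega>) (s3 \<omega>) (s4 \<omega>)" and g=s1, OF l2 s1])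
qed

lemma card_sum_ofbool: fixes n :: nat shows "card {i\<in>{..<n}. P i} = (\<Sum>i\<in>{..<n}. of_bool (P i) :: nat)"
proof -
  have "(\<Sum>i\<in>{..<n}. of_bool (P i) :: nat) = of_nat (card ({..<n} \<inter> {i. P i}))"
    using sum_of_bool_eq[of "{..<n}" P] by simp
  moreover have "{..<n} \<inter> {i. P i} = {i\<in>{..<n}. P i}" by blast
  ultimately show ?thesis by simp
qed

lemma Nrisk_card: "Nrisk n z w s = card {i\<in>{..<n}. s \<le> w i}"
  unfolding Nrisk_def Nrisk1_def Nrisk0_def
  by (subst card_Un_disjoint[symmetric]) (auto intro!: arg_cong[where f=card])

lemma card_le_n: fixes n :: nat shows "card {i\<in>{..<n}. P i} \<le> n"
  by (rule order.trans[OF card_mono[of "{..<n}"]]) auto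

lemma Nrisk1_le: "Nrisk1 n z w s \<le> Nrisk n z w s"
  unfolding Nrisk_def by simp

lemma Mexp_bounds: "0 \<le> Mexp n z w d s" "Mexp n z w d s \<le> real (Dev n w d s)"
proof -
  let ?D = "real (Dev n w d s)" and ?N1 = "real (Nrisk1 n z w s)" and ?N = "real (Nrisk n z w s)"
  show "0 \<le> Mexp n z w d s" unfolding Mexp_def by simp
  have le: "?N1 \<le> ?N" using Nrisk1_le by simp
  show "Mexp n z w d s \<le> ?D"
  proof (cases "?N = 0")
    case True then show ?thesis unfolding Mexp_def by simp
  next
    case False
    then have "?N > 0" by simp
    moreover have "?D * ?N1 \<le> ?D * ?N" using le by (simp add: mult_left_mono)
    ultimately show ?thesis unfolding Mexp_def by (simp add: divide_le_eq)
  qed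
qed

context ctx
begin

lemma atom_interp: "1 \<le> k \<Longrightarrow> k \<le> Kdist n T0 \<Longrightarrow> \<omega>0 \<in> space M \<Longrightarrow> atom M n p1 T1 T0 Z C1 C0 W Del k \<omega>0"
  by (intro atom.intro ctx_axioms atom_axioms.intro ctx.intro prob_space_axioms)

lemma sum_gens_meas:
  assumes "\<And>i. i < n \<Longrightarrow> g i \<in> gens k'"
  shows "(\<lambda>\<omega>. \<Sum>i\<in>{..<n}. g i \<omega>) \<in> measurable (gen_sigma M (gens k')) (count_space UNIV)"
  by (rule meas_sum_nat) (use assms gen_sigma_meas in auto)

lemma S_meas:
  assumes q: "q \<in> {1..k'+1}"
  shows "(\<lambda>\<omega>. Nrisk n (\<lambda>i. Z i \<omega>) (W \<omega>) (tpt n T0 q)) \<in> measurable (gen_sigma M (gens k')) (count_space UNIV)"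
    and "(\<lambda>\<omega>. Dev n (W \<omega>) (Del \<omega>) (tpt n T0 q)) \<in> measurable (gen_sigma M (gens k')) (count_space UNIV)"
    and "(\<lambda>\<omega>. Nrisk1 n (\<lambda>i. Z i \<omega>) (W \<omega>) (tpt n T0 q)) \<in> measurable (gen_sigma M (gens k')) (count_space UNIV)"
    and "(\<lambda>\<omega>. Dev1 n (\<lambda>i. Z i \<omega>) (W \<omega>) (Del \<omega>) (tpt n T0 (q - 1))) \<in> measurable (gen_sigma M (gens k')) (count_space UNIV)"
proof -
  have "(\<lambda>\<omega>. \<Sum>i\<in>{..<n}. (\<lambda>i \<omega>. of_bool (tpt n T0 q \<le> W \<omega> i) :: nat) i \<omega>) \<in> measurable (gen_sigma M (gens k')) (count_space UNIV)"
    by (rule sum_gens_meas) (use q in \<open>auto simp: gens_def\<close>)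
  moreover have "Nrisk n (\<lambda>i. Z i \<omega>) (W \<omega>) (tpt n T0 q) = (\<Sum>i\<in>{..<n}. (\<lambda>i \<omega>. of_bool (tpt n T0 q \<le> W \<omega> i) :: nat) i \<omega>)" for \<omega>
    unfolding Nrisk_card card_sum_ofbool ..
  ultimately show "(\<lambda>\<omega>. Nrisk n (\<lambda>i. Z i \<omega>) (W \<omega>) (tpt n T0 q)) \<in> measurable (gen_sigma M (gens k')) (count_space UNIV)"
    by simp
  have "(\<lambda>\<omega>. \<Sum>i\<in>{..<n}. (\<lambda>i \<omega>. of_bool (Del \<omega> i \<and> W \<omega> i = tpt n T0 q) :: nat) i \<omega>) \<in> measurable (gen_sigma M (gens k')) (count_space UNIV)"
    by (rule sum_gens_meas) (use q in \<open>auto simp: gens_def\<close>)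
  moreover have "Dev n (W \<omega>) (Del \<omega>) (tpt n T0 q) = (\<Sum>i\<in>{..<n}. (\<lambda>i \<omega>. of_bool (Del \<omega> i \<and> W \<omega> i = tpt n T0 q) :: nat) i \<omega>)" for \<omega>
    unfolding Dev_def card_sum_ofbool ..
  ultimately show "(\<lambda>\<omega>. Dev n (W \<omega>) (Del \<omega>) (tpt n T0 q)) \<in> measurable (gen_sigma M (gens k')) (count_space UNIV)"
    by simp
  show "(\<lambda>\<omega>. Nrisk1 n (\<lambda>i. Z i \<omega>) (W \<omega>) (tpt n T0 q)) \<in> measurable (gen_sigma M (gens k')) (count_space UNIV)"
    by (rule gen_sigma_meas) (use q in \<open>auto simp: gens_def\<close>)
  have "(\<lambda>\<omega>. \<Sum>i\<in>{..<n}. (\<lambda>i \<omega>. of_bool (Z i \<omega> \<and> Del \<omega> i \<and> W \<omega> i = tpt n T0 (q - 1)) :: nat) i \<omega>) \<in> measurable (gen_sigma M (gens k')) (count_space UNIV)"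
    by (rule sum_gens_meas) (use q in \<open>auto simp: gens_def\<close>)
  moreover have "Dev1 n (\<lambda>i. Z i \<omega>) (W \<omega>) (Del \<omega>) (tpt n T0 (q - 1)) = (\<Sum>i\<in>{..<n}. (\<lambda>i \<omega>. of_bool (Z i \<omega> \<and> Del \<omega> i \<and> W \<omega> i = tpt n T0 (q - 1)) :: nat) i \<omega>)" for \<omega>
    unfolding Dev1_def card_sum_ofbool ..
  ultimately show "(\<lambda>\<omega>. Dev1 n (\<lambda>i. Z i \<omega>) (W \<omega>) (Del \<omega>) (tpt n T0 (q - 1))) \<in> measurable (gen_sigma M (gens k')) (count_space UNIV)"
    by simp
qed


definition Xi :: "nat \<Rightarrow> 'a \<Rightarrow> real" where
  "Xi k \<omega> = real (Dev1 n (\<lambda>i. Z i \<omega>) (W \<omega>) (Del \<omega>) (tpt n T0 k)) - Mexp n (\<lambda>i. Z i \<omega>) (W \<omega>) (Del \<omega>) (tpt n T0 k)"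

definition Xj :: "nat \<Rightarrow> nat \<Rightarrow> 'a \<Rightarrow> real" where
  "Xj k j \<omega> = of_bool (Dev1 n (\<lambda>i. Z i \<omega>) (W \<omega>) (Del \<omega>) (tpt n T0 k) = j)"

definition Hj :: "nat \<Rightarrow> nat \<Rightarrow> 'a \<Rightarrow> real" where
  "Hj k j \<omega> = hgeom_pmf (Nrisk n (\<lambda>i. Z i \<omega>) (W \<omega>) (tpt n T0 k)) (Dev n (W \<omega>) (Del \<omega>) (tpt n T0 k))
                     (Nrisk1 n (\<lambda>i. Z i \<omega>) (W \<omega>) (tpt n T0 k)) j"

lemma sub_all: "subalgebra M (gen_sigma M (gens k))"
  by (rule gen_sigma_sub[OF gens_meas])

lemma Xi_meas:
  assumes k: "1 \<le> k"
  shows "Xi k \<in> borel_measurable (gen_sigma M (gens k))" "Xj k j \<in> borel_measurable (gen_sigma M (gens k))"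
proof -
  have q1: "k + 1 \<in> {1..k+1}" by simp
  have q2: "k \<in> {1..k+1}" using k by simp
  have D1: "(\<lambda>\<omega>. Dev1 n (\<lambda>i. Z i \<omega>) (W \<omega>) (Del \<omega>) (tpt n T0 k)) \<in> measurable (gen_sigma M (gens k)) (count_space UNIV)"
    using S_meas(4)[OF q1] by simp
  have "(\<lambda>\<omega>. (\<lambda>a b c d. real d - real b * real c / real a)
     (Nrisk n (\<lambda>i. Z i \<omega>) (W \<omega>) (tpt n T0 k)) (Dev n (W \<omega>) (Del \<omega>) (tpt n T0 k))
     (Nrisk1 n (\<lambda>i. Z i \<omega>) (W \<omega>) (tpt n T0 k)) (Dev1 n (\<lambda>i. Z i \<omega>) (W \<omega>) (Del \<omega>) (tpt n T0 k)))
     \<in> borel_measurable (gen_sigma M (gens k))"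
    by (rule meas4[OF S_meas(1-3)[OF q2] D1])
  then show "Xi k \<in> borel_measurable (gen_sigma M (gens k))"
    unfolding Xi_def[abs_def] Mexp_def by simp
  have "(\<lambda>\<omega>. (\<lambda>a b c d. of_bool (d = j) :: real)
     (Nrisk n (\<lambda>i. Z i \<omega>) (W \<omega>) (tpt n T0 k)) (Dev n (W \<omega>) (Del \<omega>) (tpt n T0 k))
     (Nrisk1 n (\<lambda>i. Z i \<omega>) (W \<omega>) (tpt n T0 k)) (Dev1 n (\<lambda>i. Z i \<omega>) (W \<omega>) (Del \<omega>) (tpt n T0 k)))
     \<in> borel_measurable (gen_sigma M (gens k))"
    by (rule meas4[OF S_meas(1-3)[OF q2] D1])
  then show "Xj k j \<in> borel_measurable (gen_sigma M (gens k))"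
    unfolding Xj_def[abs_def] by simp
qed

lemma Hj_meas:
  assumes k: "1 \<le> k"
  shows "Hj k j \<in> borel_measurable (gen_sigma M (gens (k - 1)))"
proof -
  have q2: "k \<in> {1..k-1+1}" using k by simp
  have "(\<lambda>\<omega>. (\<lambda>a b c d. hgeom_pmf a b c j)
     (Nrisk n (\<lambda>i. Z i \<omega>) (W \<omega>) (tpt n T0 k)) (Dev n (W \<omega>) (Del \<omega>) (tpt n T0 k))
     (Nrisk1 n (\<lambda>i. Z i \<omega>) (W \<omega>) (tpt n T0 k)) (Nrisk1 n (\<lambda>i. Z i \<omega>) (W \<omega>) (tpt n T0 k)))
     \<in> borel_measurable (gen_sigma M (gens (k - 1)))"
    by (rule meas4[OF S_meas(1-3)[OF q2] S_meas(3)[OF q2]])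
  then show ?thesis unfolding Hj_def[abs_def] by simp
qed

lemma Dev1_le: "Dev1 n z w d s \<le> n" unfolding Dev1_def by (rule card_le_n)
lemma Dev_le: "Dev n w d s \<le> n" unfolding Dev_def by (rule card_le_n)
lemma Nrisk_le: "Nrisk n z w s \<le> n" unfolding Nrisk_card by (rule card_le_n)
lemma Nrisk1_le_n: "Nrisk1 n z w s \<le> n" using Nrisk1_le[of n z w s] Nrisk_le[of z w s] by linarith

lemma Xi_int: "1 \<le> k \<Longrightarrow> integrable M (Xi k)"
proof (rule integrable_const_bound[where B="real n + real n"])
  assume k: "1 \<le> k"
  show "Xi k \<in> borel_measurable M" by (rule measurable_from_subalg[OF sub_all Xi_meas(1)[OF k]])
  show "AE x in M. norm (Xi k x) \<le> real n + real n"
  proof (rule AE_I2)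
    fix x
    let ?D1 = "Dev1 n (\<lambda>i. Z i x) (W x) (Del x) (tpt n T0 k)"
    let ?Mx = "Mexp n (\<lambda>i. Z i x) (W x) (Del x) (tpt n T0 k)"
    have a: "real ?D1 \<le> real n" using Dev1_le by simp
    have b: "0 \<le> ?Mx" "?Mx \<le> real n"
      using Mexp_bounds[of n "\<lambda>i. Z i x" "W x" "Del x" "tpt n T0 k"] Dev_le[of "W x" "Del x" "tpt n T0 k"] by auto
    show "norm (Xi k x) \<le> real n + real n" unfolding Xi_def using a b by simp
  qed
qed

lemma Xj_int: "1 \<le> k \<Longrightarrow> integrable M (Xj k j)"
proof (rule integrable_const_bound[where B=1])
  assume k: "1 \<le> k"
  show "Xj k j \<in> borel_measurable M" by (rule measurable_from_subalg[OF sub_all Xi_meas(2)[OF k]])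
  show "AE x in M. norm (Xj k j x) \<le> 1" by (rule AE_I2) (simp add: Xj_def)
qed

lemma Hj_int: "1 \<le> k \<Longrightarrow> integrable M (Hj k j)"
proof -
  assume k: "1 \<le> k"
  define Bd where "Bd = Max ((\<lambda>(a,b,c). \<bar>hgeom_pmf a b c j\<bar>) ` ({..n} \<times> {..n} \<times> {..n}))"
  show ?thesis
  proof (rule integrable_const_bound[where B=Bd])
    show "Hj k j \<in> borel_measurable M" by (rule measurable_from_subalg[OF sub_all Hj_meas[OF k]])
    show "AE x in M. norm (Hj k j x) \<le> Bd"
    proof (rule AE_I2)
      fix x
      let ?a = "Nrisk n (\<lambda>i. Z i x) (W x) (tpt n T0 k)"
      let ?b = "Dev n (W x) (Del x) (tpt n T0 k)"
      let ?c = "Nrisk1 n (\<lambda>i. Z i x) (W x) (tpt n T0 k)"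
      have mem: "(?a, ?b, ?c) \<in> {..n} \<times> {..n} \<times> {..n}" using Nrisk_le Dev_le Nrisk1_le_n by auto
      have "\<bar>hgeom_pmf ?a ?b ?c j\<bar> \<le> Bd"
        unfolding Bd_def by (rule Max_ge) (use mem in force)+
      then show "norm (Hj k j x) \<le> Bd" unfolding Hj_def by simp
    qed
  qed
qed

lemma cond_i:
  assumes k: "1 \<le> k" "k \<le> Kdist n T0"
  shows "AE \<omega> in M. real_cond_exp M (gen_sigma M (gens (k - 1))) (Xi k) \<omega> = 0"
proof (rule condexp_atoms[OF prob_space_axioms gens_finite gens_meas gens_fin_range Xi_int[OF k(1)]])
  show "integrable M (\<lambda>_. 0::real)" by simp
  show "(\<lambda>_. 0::real) \<in> borel_measurable (gen_sigma M (gens (k - 1)))" by (rule measurable_const) simp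
  fix \<omega>0 assume w0: "\<omega>0 \<in> space M"
  interpret a: atom M n p1 T1 T0 Z C1 C0 W Del k \<omega>0 by (rule atom_interp[OF k w0])
  show "(\<integral>\<omega>. Xi k \<omega> * indicator {\<omega> \<in> space M. \<forall>f\<in>gens (k - 1). f \<omega> = f \<omega>0} \<omega> \<partial>M)
     = (\<integral>\<omega>. 0 * indicator {\<omega> \<in> space M. \<forall>f\<in>gens (k - 1). f \<omega> = f \<omega>0} \<omega> \<partial>M)"
    using a.atom_i unfolding a.E_def Xi_def .
qed

lemma cond_ii:
  assumes k: "1 \<le> k" "k \<le> Kdist n T0"
  shows "AE \<omega> in M. real_cond_exp M (gen_sigma M (gens (k - 1))) (Xj k j) \<omega> = Hj k j \<omega>"
proof (rule condexp_atoms[OF prob_space_axioms gens_finite gens_meas gens_fin_range Xj_int[OF k(1)] Hj_int[OF k(1)] Hj_meas[OF k(1)]])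
  fix \<omega>0 assume w0: "\<omega>0 \<in> space M"
  interpret a: atom M n p1 T1 T0 Z C1 C0 W Del k \<omega>0 by (rule atom_interp[OF k w0])
  show "(\<integral>\<omega>. Xj k j \<omega> * indicator {\<omega> \<in> space M. \<forall>f\<in>gens (k - 1). f \<omega> = f \<omega>0} \<omega> \<partial>M)
     = (\<integral>\<omega>. Hj k j \<omega> * indicator {\<omega> \<in> space M. \<forall>f\<in>gens (k - 1). f \<omega> = f \<omega>0} \<omega> \<partial>M)"
    using a.atom_ii unfolding a.E_def Xj_def Hj_def .
qed

lemma main:
  "mds M (filt M n T0 Z W Del) (\<lambda>k \<omega>. real (Dev1 n (\<lambda>i. Z i \<omega>) (W \<omega>) (Del \<omega>) (tpt n T0 k))
                         - Mexp n (\<lambda>i. Z i \<omega>) (W \<omega>) (Del \<omega>) (tpt n T0 k)) (Kdist n T0)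
    \<and> (\<forall>k\<in>{1..Kdist n T0}. \<forall>j::nat. AE \<omega> in M.
         real_cond_exp M (filt M n T0 Z W Del (k - 1))
            (\<lambda>\<omega>. of_bool (Dev1 n (\<lambda>i. Z i \<omega>) (W \<omega>) (Del \<omega>) (tpt n T0 k) = j)) \<omega>
         = hgeom_pmf (Nrisk n (\<lambda>i. Z i \<omega>) (W \<omega>) (tpt n T0 k))
                     (Dev n (W \<omega>) (Del \<omega>) (tpt n T0 k))
                     (Nrisk1 n (\<lambda>i. Z i \<omega>) (W \<omega>) (tpt n T0 k)) j)"
proof (intro conjI ballI allI)
  show "mds M (filt M n T0 Z W Del) (\<lambda>k \<omega>. real (Dev1 n (\<lambda>i. Z i \<omega>) (W \<omega>) (Del \<omega>) (tpt n T0 k))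
                         - Mexp n (\<lambda>i. Z i \<omega>) (W \<omega>) (Del \<omega>) (tpt n T0 k)) (Kdist n T0)"
    unfolding mds_def filt_eq
  proof (intro conjI allI impI ballI)
    fix k show "subalgebra M (gen_sigma M (gens k))" by (rule sub_all)
  next
    fix k show "sets (gen_sigma M (gens k)) \<subseteq> sets (gen_sigma M (gens (Suc k)))"
      by (rule gen_sigma_mono[OF gens_mono]) simp
  next
    fix k assume k: "k \<in> {1..Kdist n T0}"
    show "(\<lambda>\<omega>. real (Dev1 n (\<lambda>i. Z i \<omega>) (W \<omega>) (Del \<omega>) (tpt n T0 k)) - Mexp n (\<lambda>i. Z i \<omega>) (W \<omega>) (Del \<omega>) (tpt n T0 k))
          \<in> borel_measurable (gen_sigma M (gens k))"
      using Xi_meas(1)[of k] k unfolding Xi_def[abs_def] by simp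
    show "integrable M (\<lambda>\<omega>. real (Dev1 n (\<lambda>i. Z i \<omega>) (W \<omega>) (Del \<omega>) (tpt n T0 k)) - Mexp n (\<lambda>i. Z i \<omega>) (W \<omega>) (Del \<omega>) (tpt n T0 k))"
      using Xi_int[of k] k unfolding Xi_def[abs_def] by simp
    show "AE \<omega> in M. real_cond_exp M (gen_sigma M (gens (k - 1)))
       (\<lambda>\<omega>. real (Dev1 n (\<lambda>i. Z i \<omega>) (W \<omega>) (Del \<omega>) (tpt n T0 k)) - Mexp n (\<lambda>i. Z i \<omega>) (W \<omega>) (Del \<omega>) (tpt n T0 k)) \<omega> = 0"
      using cond_i[of k] k unfolding Xi_def[abs_def] by simp
  qed
next
  fix k j assume k: "k \<in> {1..Kdist n T0}"
  show "AE \<omega> in M. real_cond_exp M (filt M n T0 Z W Del (k - 1))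
            (\<lambda>\<omega>. of_bool (Dev1 n (\<lambda>i. Z i \<omega>) (W \<omega>) (Del \<omega>) (tpt n T0 k) = j)) \<omega>
         = hgeom_pmf (Nrisk n (\<lambda>i. Z i \<omega>) (W \<omega>) (tpt n T0 k))
                     (Dev n (W \<omega>) (Del \<omega>) (tpt n T0 k))
                     (Nrisk1 n (\<lambda>i. Z i \<omega>) (W \<omega>) (tpt n T0 k)) j"
    using cond_ii[of k j] k unfolding filt_eq Xj_def[abs_def] Hj_def by simp
qed

end

theorem theorem2:
  fixes M :: "'a measure" and n :: nat and p1 :: real
    and T1 T0 :: "nat \<Rightarrow> real"
    and Z :: "nat \<Rightarrow> 'a \<Rightarrow> bool"
    and C1 C0 :: "nat \<Rightarrow> 'a \<Rightarrow> ereal"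
    and W :: "'a \<Rightarrow> nat \<Rightarrow> ereal" and Del :: "'a \<Rightarrow> nat \<Rightarrow> bool"
    and F :: "nat \<Rightarrow> 'a measure" and K :: nat
  assumes M: "prob_space M"
    and p1: "0 < p1" "p1 < 1"
    and Tnn: "\<And>i. i < n \<Longrightarrow> 0 \<le> T1 i" "\<And>i. i < n \<Longrightarrow> 0 \<le> T0 i"
    and H0: "\<And>i. i < n \<Longrightarrow> T1 i = T0 i"
    and Cnn: "\<And>i \<omega>. i < n \<Longrightarrow> \<omega> \<in> space M \<Longrightarrow> 0 \<le> C1 i \<omega> \<and> 0 \<le> C0 i \<omega>"
    and Zmeas: "\<And>i. i < n \<Longrightarrow> Z i \<in> measurable M (count_space UNIV)"
    and Cmeas: "\<And>i. i < n \<Longrightarrow> (\<lambda>\<omega>. (C1 i \<omega>, C0 i \<omega>)) \<in> borel_measurable M"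
    and Zind: "prob_space.indep_vars M (\<lambda>_. count_space UNIV) Z {..<n}"
    and Zbern: "\<And>i. i < n \<Longrightarrow> measure M {\<omega> \<in> space M. Z i \<omega>} = p1"
    and Cind: "prob_space.indep_vars M (\<lambda>_. borel) (\<lambda>i \<omega>. (C1 i \<omega>, C0 i \<omega>)) {..<n}"
    and Cid: "\<And>i. i < n \<Longrightarrow>
       distr M borel (\<lambda>\<omega>. (C1 i \<omega>, C0 i \<omega>)) = distr M borel (\<lambda>\<omega>. (C1 0 \<omega>, C0 0 \<omega>))"
    and ZCind: "prob_space.indep_set M
       {(\<lambda>\<omega>. \<lambda>i\<in>{..<n}. Z i \<omega>) -` A \<inter> space M | A.
          A \<in> sets (Pi\<^sub>M {..<n} (\<lambda>_. count_space UNIV))}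
       {(\<lambda>\<omega>. \<lambda>i\<in>{..<n}. (C1 i \<omega>, C0 i \<omega>)) -` B \<inter> space M | B.
          B \<in> sets (Pi\<^sub>M {..<n} (\<lambda>_. borel))}"
    and W_def: "W \<equiv> \<lambda>\<omega> i. min (ereal (if Z i \<omega> then T1 i else T0 i))
                              (if Z i \<omega> then C1 i \<omega> else C0 i \<omega>)"
    and Del_def: "Del \<equiv> \<lambda>\<omega> i. ereal (if Z i \<omega> then T1 i else T0 i)
                              \<le> (if Z i \<omega> then C1 i \<omega> else C0 i \<omega>)"
    and F_def: "F \<equiv> filt M n T0 Z W Del"
    and K_def: "K \<equiv> Kdist n T0"
  shows "mds M F (\<lambda>k \<omega>. real (Dev1 n (\<lambda>i. Z i \<omega>) (W \<omega>) (Del \<omega>) (tpt n T0 k))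
                         - Mexp n (\<lambda>i. Z i \<omega>) (W \<omega>) (Del \<omega>) (tpt n T0 k)) K
    \<and> (\<forall>k\<in>{1..K}. \<forall>j::nat. AE \<omega> in M.
         real_cond_exp M (F (k - 1))
            (\<lambda>\<omega>. of_bool (Dev1 n (\<lambda>i. Z i \<omega>) (W \<omega>) (Del \<omega>) (tpt n T0 k) = j)) \<omega>
         = hgeom_pmf (Nrisk n (\<lambda>i. Z i \<omega>) (W \<omega>) (tpt n T0 k))
                     (Dev n (W \<omega>) (Del \<omega>) (tpt n T0 k))
                     (Nrisk1 n (\<lambda>i. Z i \<omega>) (W \<omega>) (tpt n T0 k)) j)"
proof -
  interpret ctx M n p1 T1 T0 Z C1 C0 W Del
  proof (intro ctx.intro ctx_axioms.intro)
    show "prob_space M" by (rule M)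
  next
    fix i assume "i < n" then show "T1 i = T0 i" by (rule H0)
  next
    fix i assume "i < n" then show "Z i \<in> measurable M (count_space UNIV)" by (rule Zmeas)
  next
    fix i assume "i < n" then show "(\<lambda>\<omega>. (C1 i \<omega>, C0 i \<omega>)) \<in> borel_measurable M" by (rule Cmeas)
  next
    show "prob_space.indep_vars M (\<lambda>_. count_space UNIV) Z {..<n}" by (rule Zind)
  next
    fix i assume "i < n" then show "measure M {\<omega> \<in> space M. Z i \<omega>} = p1" by (rule Zbern)
  next
    show "prob_space.indep_vars M (\<lambda>_. borel) (\<lambda>i \<omega>. (C1 i \<omega>, C0 i \<omega>)) {..<n}" by (rule Cind)
  next
    fix i assume "i < n"
    then show "distr M borel (\<lambda>\<omega>. (C1 i \<omega>, C0 i \<omega>)) = distr M borel (\<lambda>\<omega>. (C1 0 \<omega>, C0 0 \<omega>))" by (rule Cid)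
  next
    show "prob_space.indep_set M
       {(\<lambda>\<omega>. \<lambda>i\<in>{..<n}. Z i \<omega>) -` A \<inter> space M | A.
          A \<in> sets (Pi\<^sub>M {..<n} (\<lambda>_. count_space UNIV))}
       {(\<lambda>\<omega>. \<lambda>i\<in>{..<n}. (C1 i \<omega>, C0 i \<omega>)) -` B \<inter> space M | B.
          B \<in> sets (Pi\<^sub>M {..<n} (\<lambda>_. borel))}" by (rule ZCind)
  next
    show "W = (\<lambda>\<omega> i. min (ereal (if Z i \<omega> then T1 i else T0 i))
                              (if Z i \<omega> then C1 i \<omega> else C0 i \<omega>))" by (rule W_def[THEN meta_eq_to_obj_eq])
  next
    show "Del = (\<lambda>\<omega> i. ereal (if Z i \<omega> then T1 i else T0 i)
                              \<le> (if Z i \<omega> then C1 i \<omega> else C0 i \<omega>))" by (rule Del_def[THEN meta_eq_to_obj_eq])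
  qed
  show ?thesis unfolding F_def K_def by (rule main)
qed

end
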